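(* Let $(X,e\colon X\to M\otimes X)$ be a coalgebra for $F$ on $\mathbf{Met_3}^{C}$ and let $x\in X$. Define $\chi_0=x$, $\chi_n=(M^{n-1}\otimes e)(\chi_{n-1})\in M^n\otimes X$. For any choice of $m_0,m_1,\ldots\in M$ with $\chi_n=m_0\otimes\cdots\otimes m_{n-1}\otimes x_n$ (some $x_n\in X$) for all $n$, and any $z\in\{T,L,R\}$, let $\theta_n(x)=m_0\otimes\cdots\otimes m_{n-1}\otimes z\in G$. Then the limit $\lim_{n\to\infty}\theta_n(x)$ in $S$ exists and is independent of the choice of representatives $m_0,m_1,\ldots$ and of $z$. In particular $f\colon X\to S$, $f(x)=\lim_{n\to\infty}\theta_n(x)$, is well-defined.
   Context: A tripointed metric space is a set with three distinct points $T,L,R$ and a metric bounded by $1$ in which $T,L,R$ have pairwise distance $1$. $\mathbf{Met_3}^{C}$: tripointed metric spaces with continuous maps preserving $T,L,R$. Let $M=\{a,b,c\}$. For a tripointed metric space $X$, $M\times X$ has metric $d((m,x),(n,y))=\tfrac12d(x,y)$ if $m=n$, $1$ otherwise; $M\otimes X$ is the quotient metric space by the equivalence relation generated by $(b,T)\sim(a,L)$, $(a,R)\sim(c,T)$, $(c,L)\sim(b,R)$, with elements $m\otimes x$ and distinguished points $a\otimes T,b\otimes L,c\otimes R$; $F=M\otimes-$, $(M\otimes f)(m\otimes x)=m\otimes f(x)$; $M^n\otimes-$ is the $n$-fold iterate. A coalgebra is a pair $(X,e\colon X\to FX)$. Let $I=\{T,L,R\}$ (discrete metric) and $!\colon I\to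 FI$, $T\mapsto a\otimes T$, $L\mapsto b\otimes L$, $R\mapsto c\otimes R$; the maps $F^n!$ are isometric embeddings and $G$ is the metric union (colimit) of $I\to FI\to F^2I\to\cdots$, so its elements are expressions $m_0\otimes\cdots\otimes m_{n-1}\otimes z$, $z\in\{T,L,R\}$, modulo the induced identifications, and each $M^n\otimes I$ embeds isometrically in $G$. $S$ is the Cauchy completion of $G$ (with distinguished points $T,L,R$), and $G\subseteq S$. *)

theory Defs
  imports Complex_Main
begin

datatype Mlet = Ma | Mb | Mc
datatype tri = TT | LL | RR

record 'p tms =
  car :: "'p set"
  dst :: "'p \<Rightarrow> 'p \<Rightarrow> real"
  ptT :: 'p
  ptL :: 'p
  ptR :: 'p

definition tripointed :: "'p tms \<Rightarrow> bool" where
  "tripointed X \<longleftrightarrow>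
     (\<forall>x\<in>car X. \<forall>y\<in>car X. 0 \<le> dst X x y \<and> dst X x y \<le> 1 \<and>
        (dst X x y = 0 \<longleftrightarrow> x = y) \<and> dst X x y = dst X y x) \<and>
     (\<forall>x\<in>car X. \<forall>y\<in>car X. \<forall>z\<in>car X. dst X x z \<le> dst X x y + dst X y z) \<and>
     ptT X \<in> car X \<and> ptL X \<in> car X \<and> ptR X \<in> car X \<and>
     dst X (ptT X) (ptL X) = 1 \<and> dst X (ptT X) (ptR X) = 1 \<and> dst X (ptL X) (ptR X) = 1"

definition qdist :: "'q set \<Rightarrow> ('q \<Rightarrow> 'q \<Rightarrow> real) \<Rightarrow> ('q \<times> 'q) set \<Rightarrow> 'q set \<Rightarrow> 'q set \<Rightarrow> real" where
  "qdist B d E P Q = Inf { sum_list (map (\<lambda>(p,q). d p q) ch) | ch.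
      ch \<noteq> [] \<and> set ch \<subseteq> B \<times> B \<and> fst (hd ch) \<in> P \<and> snd (last ch) \<in> Q \<and>
      (\<forall>i. Suc i < length ch \<longrightarrow> (snd (ch ! i), fst (ch ! Suc i)) \<in> E) }"

text \<open>Points of M^n \<otimes> X are represented as sets of pairs (word, x): the element
  m0 \<otimes> ... \<otimes> m(n-1) \<otimes> x is represented by the set of all (word, point) expressions
  identified with it.  The element m \<otimes> y of M \<otimes> Y (y a point of Y) is the union of
  the prefixed representatives of its equivalence class in M \<times> Y.\<close>

type_synonym 'x pt = "(Mlet list \<times> 'x) set"

definition prep :: "Mlet \<Rightarrow> 'x pt \<Rightarrow> 'x pt" where
  "prep m y = (\<lambda>(w, x). (m # w, x)) ` y"

definition tbase :: "'x pt tms \<Rightarrow> (Mlet \<times> 'x pt) set" where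
  "tbase Y = UNIV \<times> car Y"

definition tdist :: "'x pt tms \<Rightarrow> Mlet \<times> 'x pt \<Rightarrow> Mlet \<times> 'x pt \<Rightarrow> real" where
  "tdist Y p q = (if fst p = fst q then dst Y (snd p) (snd q) / 2 else 1)"

definition tgen :: "'x pt tms \<Rightarrow> ((Mlet \<times> 'x pt) \<times> (Mlet \<times> 'x pt)) set" where
  "tgen Y = {((Mb, ptT Y), (Ma, ptL Y)), ((Ma, ptR Y), (Mc, ptT Y)), ((Mc, ptL Y), (Mb, ptR Y))}"

definition tequiv :: "'x pt tms \<Rightarrow> ((Mlet \<times> 'x pt) \<times> (Mlet \<times> 'x pt)) set" where
  "tequiv Y = (tgen Y \<union> (tgen Y)\<inverse>)\<^sup>* \<inter> (tbase Y \<times> tbase Y)"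

definition tcls :: "'x pt tms \<Rightarrow> Mlet \<times> 'x pt \<Rightarrow> (Mlet \<times> 'x pt) set" where
  "tcls Y p = tequiv Y `` {p}"

definition tenc :: "(Mlet \<times> 'x pt) set \<Rightarrow> 'x pt" where
  "tenc C = \<Union> ((\<lambda>(m, y). prep m y) ` C)"

definition tens1 :: "'x pt tms \<Rightarrow> Mlet \<Rightarrow> 'x pt \<Rightarrow> 'x pt" where
  "tens1 Y m y = tenc (tcls Y (m, y))"

definition trep :: "'x pt tms \<Rightarrow> 'x pt \<Rightarrow> Mlet \<times> 'x pt" where
  "trep Y \<alpha> = (SOME p. p \<in> tbase Y \<and> \<alpha> = tens1 Y (fst p) (snd p))"

definition Ften :: "'x pt tms \<Rightarrow> 'x pt tms" where
  "Ften Y = \<lparr> car = {tens1 Y m y | m y. y \<in> car Y},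
              dst = (\<lambda>\<alpha> \<beta>. qdist (tbase Y) (tdist Y) (tequiv Y)
                               (tcls Y (trep Y \<alpha>)) (tcls Y (trep Y \<beta>))),
              ptT = tens1 Y Ma (ptT Y), ptL = tens1 Y Mb (ptL Y), ptR = tens1 Y Mc (ptR Y) \<rparr>"

definition Fmap :: "'x pt tms \<Rightarrow> 'x pt tms \<Rightarrow> ('x pt \<Rightarrow> 'x pt) \<Rightarrow> 'x pt \<Rightarrow> 'x pt" where
  "Fmap Y Y' f \<alpha> = tens1 Y' (fst (trep Y \<alpha>)) (f (snd (trep Y \<alpha>)))"

text \<open>X itself (= M^0 \<otimes> X), in the flattened representation\<close>
definition lift :: "'x tms \<Rightarrow> 'x pt tms" where
  "lift X = \<lparr> car = (\<lambda>x. {([], x)}) ` car X,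
              dst = (\<lambda>\<alpha> \<beta>. dst X (snd (the_elem \<alpha>)) (snd (the_elem \<beta>))),
              ptT = {([], ptT X)}, ptL = {([], ptL X)}, ptR = {([], ptR X)} \<rparr>"

definition Fpow :: "'x tms \<Rightarrow> nat \<Rightarrow> 'x pt tms" where
  "Fpow X n = (Ften ^^ n) (lift X)"

primrec tens :: "'x tms \<Rightarrow> Mlet list \<Rightarrow> 'x \<Rightarrow> 'x pt" where
  "tens X [] x = {([], x)}"
| "tens X (m # w) x = tens1 (Fpow X (length w)) m (tens X w x)"

primrec emap :: "'x tms \<Rightarrow> ('x \<Rightarrow> 'x pt) \<Rightarrow> nat \<Rightarrow> 'x pt \<Rightarrow> 'x pt" where
  "emap X e 0 = (\<lambda>\<alpha>. e (snd (the_elem \<alpha>)))"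
| "emap X e (Suc k) = Fmap (Fpow X k) (Fpow X (Suc k)) (emap X e k)"

definition coalg :: "'x tms \<Rightarrow> ('x \<Rightarrow> 'x pt) \<Rightarrow> bool" where
  "coalg X e \<longleftrightarrow> tripointed X \<and>
     (\<forall>x\<in>car X. e x \<in> car (Ften (lift X))) \<and>
     e (ptT X) = ptT (Ften (lift X)) \<and> e (ptL X) = ptL (Ften (lift X)) \<and>
     e (ptR X) = ptR (Ften (lift X)) \<and>
     (\<forall>x\<in>car X. \<forall>\<epsilon>>0. \<exists>\<delta>>0. \<forall>y\<in>car X.
        dst X x y < \<delta> \<longrightarrow> dst (Ften (lift X)) (e x) (e y) < \<epsilon>)"

primrec chi :: "'x tms \<Rightarrow> ('x \<Rightarrow> 'x pt) \<Rightarrow> 'x \<Rightarrow> nat \<Rightarrow> 'x pt" where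
  "chi X e x 0 = {([], x)}"
| "chi X e x (Suc n) = emap X e n (chi X e x n)"

definition Itms :: "tri tms" where
  "Itms = \<lparr> car = UNIV, dst = (\<lambda>x y. if x = y then 0 else 1), ptT = TT, ptL = LL, ptR = RR \<rparr>"

definition bang :: "tri \<Rightarrow> tri pt" where
  "bang z = tens1 (lift Itms) (case z of TT \<Rightarrow> Ma | LL \<Rightarrow> Mb | RR \<Rightarrow> Mc) {([], z)}"

primrec Gembs :: "nat \<Rightarrow> nat \<Rightarrow> tri pt \<Rightarrow> tri pt" where
  "Gembs n 0 \<alpha> = \<alpha>"
| "Gembs n (Suc j) \<alpha> = emap Itms bang (n + j) (Gembs n j \<alpha>)"

text \<open>G = colimit of I \<rightarrow> F I \<rightarrow> F^2 I \<rightarrow> ...\<close>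
definition Grel :: "((nat \<times> tri pt) \<times> (nat \<times> tri pt)) set" where
  "Grel = {((n, \<alpha>), (k, \<beta>)) | n \<alpha> k \<beta>. \<alpha> \<in> car (Fpow Itms n) \<and> \<beta> \<in> car (Fpow Itms k) \<and>
             (\<exists>N \<ge> max n k. Gembs n (N - n) \<alpha> = Gembs k (N - k) \<beta>)}"

definition Gcls :: "nat \<Rightarrow> tri pt \<Rightarrow> (nat \<times> tri pt) set" where
  "Gcls n \<alpha> = Grel `` {(n, \<alpha>)}"

definition Gpts :: "(nat \<times> tri pt) set set" where
  "Gpts = {Gcls n \<alpha> | n \<alpha>. \<alpha> \<in> car (Fpow Itms n)}"

text \<open>metric union: distance computed in a common stage M^N \<otimes> I\<close>
definition dG :: "(nat \<times> tri pt) set \<Rightarrow> (nat \<times> tri pt) set \<Rightarrow> real" where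
  "dG g h = (SOME r. \<exists>(n, \<alpha>)\<in>g. \<exists>(k, \<beta>)\<in>h.
       r = dst (Fpow Itms (max n k)) (Gembs n (max n k - n) \<alpha>) (Gembs k (max n k - k) \<beta>))"

text \<open>S = Cauchy completion of G\<close>
definition Gcauchy :: "(nat \<Rightarrow> (nat \<times> tri pt) set) \<Rightarrow> bool" where
  "Gcauchy s \<longleftrightarrow> (\<forall>n. s n \<in> Gpts) \<and>
     (\<forall>\<epsilon>>0. \<exists>N. \<forall>m\<ge>N. \<forall>n\<ge>N. dG (s m) (s n) < \<epsilon>)"

definition Srel :: "((nat \<Rightarrow> (nat \<times> tri pt) set) \<times> (nat \<Rightarrow> (nat \<times> tri pt) set)) set" where
  "Srel = {(s, t). Gcauchy s \<and> Gcauchy t \<and> (\<lambda>n. dG (s n) (t n)) \<longlonglongrightarrow> 0}"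

definition Spts :: "(nat \<Rightarrow> (nat \<times> tri pt) set) set set" where
  "Spts = {Srel `` {s} | s. Gcauchy s}"

definition dS :: "(nat \<Rightarrow> (nat \<times> tri pt) set) set \<Rightarrow> (nat \<Rightarrow> (nat \<times> tri pt) set) set \<Rightarrow> real" where
  "dS A B = lim (\<lambda>n. dG ((SOME s. s \<in> A) n) ((SOME t. t \<in> B) n))"

definition Sinc :: "(nat \<times> tri pt) set \<Rightarrow> (nat \<Rightarrow> (nat \<times> tri pt) set) set" where
  "Sinc g = Srel `` {(\<lambda>_. g)}"

definition theta :: "(nat \<Rightarrow> Mlet) \<Rightarrow> tri \<Rightarrow> nat \<Rightarrow> (nat \<times> tri pt) set" where
  "theta ms z n = Gcls n (tens Itms (map ms [0..<n]) z)"

end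

theory Submission
  imports Defs
begin


definition chain :: "'q set \<Rightarrow> ('q \<times> 'q) set \<Rightarrow> 'q set \<Rightarrow> 'q set \<Rightarrow> ('q \<times> 'q) list \<Rightarrow> bool" where
  "chain B E P Q ch \<longleftrightarrow> ch \<noteq> [] \<and> set ch \<subseteq> B \<times> B \<and> fst (hd ch) \<in> P \<and> snd (last ch) \<in> Q \<and>
      (\<forall>i. Suc i < length ch \<longrightarrow> (snd (ch ! i), fst (ch ! Suc i)) \<in> E)"

definition cost :: "('q \<Rightarrow> 'q \<Rightarrow> real) \<Rightarrow> ('q \<times> 'q) list \<Rightarrow> real" where
  "cost d ch = sum_list (map (\<lambda>(p,q). d p q) ch)"

lemma qdist_alt: "qdist B d E P Q = Inf (cost d ` {ch. chain B E P Q ch})"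
  unfolding qdist_def chain_def cost_def by (rule arg_cong[where f=Inf]) blast

lemma cost_Cons[simp]: "cost d (x # ch) = d (fst x) (snd x) + cost d ch"
  by (cases x) (simp add: cost_def)

lemma cost_Nil[simp]: "cost d [] = 0"
  by (simp add: cost_def)

lemma cost_append[simp]: "cost d (c1 @ c2) = cost d c1 + cost d c2"
  by (simp add: cost_def)

lemma cost_nonneg: assumes "set ch \<subseteq> B \<times> B" "\<forall>p\<in>B. \<forall>q\<in>B. 0 \<le> d p q" shows "0 \<le> cost d ch"
  using assms by (induction ch) (auto simp: add_nonneg_nonneg)

lemma qdist_le: assumes "chain B E P Q ch" "\<forall>p\<in>B. \<forall>q\<in>B. 0 \<le> d p q"
  shows "qdist B d E P Q \<le> cost d ch"
proof -
  have "bdd_below (cost d ` {ch. chain B E P Q ch})"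
    by (rule bdd_belowI[where m=0]) (use assms(2) cost_nonneg in \<open>auto simp: chain_def\<close>)
  then show ?thesis unfolding qdist_alt using assms(1) by (intro cInf_lower) auto
qed

lemma qdist_ge: assumes "chain B E P Q ch0" "\<And>ch. chain B E P Q ch \<Longrightarrow> c \<le> cost d ch"
  shows "c \<le> qdist B d E P Q"
  unfolding qdist_alt using assms by (intro cInf_greatest) auto

lemma qdist_nonneg: assumes "chain B E P Q ch0" "\<forall>p\<in>B. \<forall>q\<in>B. 0 \<le> d p q"
  shows "0 \<le> qdist B d E P Q"
  by (rule qdist_ge[OF assms(1)]) (use assms(2) in \<open>auto simp: chain_def intro: cost_nonneg\<close>)

lemma chain_append:
  assumes "chain B E P Q c1" "chain B E Q R c2" "\<forall>x\<in>Q. \<forall>y\<in>Q. (x,y) \<in> E"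
  shows "chain B E P R (c1 @ c2)"
proof -
  from assms have c1: "c1 \<noteq> []" and c2: "c2 \<noteq> []" by (auto simp: chain_def)
  have links: "(snd ((c1@c2) ! i), fst ((c1@c2) ! Suc i)) \<in> E" if "Suc i < length (c1@c2)" for i
  proof (cases "Suc i < length c1")
    case True then show ?thesis using assms(1) by (auto simp: chain_def nth_append)
  next
    case False
    show ?thesis
    proof (cases "Suc i = length c1")
      case True
      then have ii: "i = length c1 - 1" by simp
      have "(c1@c2) ! i = last c1" using c1 True by (simp add: nth_append last_conv_nth ii)
      moreover have "(c1@c2) ! Suc i = hd c2" using True c2 by (simp add: nth_append hd_conv_nth)
      ultimately show ?thesis using assms by (auto simp: chain_def)
    next
      case False2: False
      with False have le: "length c1 \<le> i" by simp
      then have "(c1@c2) ! i = c2 ! (i - length c1)" "(c1@c2) ! Suc i = c2 ! Suc (i - length c1)"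
        by (simp_all add: nth_append Suc_diff_le)
      moreover have "Suc (i - length c1) < length c2" using that le by simp
      ultimately show ?thesis using assms(2) by (auto simp: chain_def)
    qed
  qed
  show ?thesis using assms c1 c2 links unfolding chain_def by auto
qed

lemma qdist_triangle:
  assumes "chain B E P Q c1" "chain B E Q R c2" "\<forall>x\<in>Q. \<forall>y\<in>Q. (x,y) \<in> E"
    "\<forall>p\<in>B. \<forall>q\<in>B. 0 \<le> d p q"
  shows "qdist B d E P R \<le> qdist B d E P Q + qdist B d E Q R"
proof -
  have A: "qdist B d E P R - cost d ch2 \<le> qdist B d E P Q" if h2: "chain B E Q R ch2" for ch2
  proof -
    have "qdist B d E P R - cost d ch2 \<le> cost d ch1" if "chain B E P Q ch1" for ch1
      using qdist_le[OF chain_append[OF that h2 assms(3)] assms(4)] by simp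
    then show ?thesis by (rule qdist_ge[OF assms(1)])
  qed
  have "qdist B d E P R - qdist B d E P Q \<le> cost d ch2" if "chain B E Q R ch2" for ch2
    using A[OF that] by linarith
  then have "qdist B d E P R - qdist B d E P Q \<le> qdist B d E Q R" by (rule qdist_ge[OF assms(2)])
  then show ?thesis by simp
qed

lemma chain_phi:
  assumes "ch \<noteq> []" "set ch \<subseteq> B \<times> B" "\<forall>i. Suc i < length ch \<longrightarrow> (snd (ch ! i), fst (ch ! Suc i)) \<in> E"
    "\<forall>p\<in>B. \<forall>q\<in>B. \<bar>\<phi> p - \<phi> q\<bar> \<le> d p q" "\<forall>(p,q)\<in>E. \<phi> p = \<phi> q"
  shows "\<bar>\<phi> (fst (hd ch)) - \<phi> (snd (last ch))\<bar> \<le> cost d ch"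
  using assms(1-3)
proof (induction ch)
  case Nil then show ?case by simp
next
  case (Cons x ch)
  have x: "\<bar>\<phi> (fst x) - \<phi> (snd x)\<bar> \<le> d (fst x) (snd x)" using Cons.prems(2) assms(4) by (cases x) auto
  show ?case
  proof (cases "ch = []")
    case True then show ?thesis using x by simp
  next
    case False
    have l0: "(snd x, fst (hd ch)) \<in> E" using Cons.prems(3)[rule_format, of 0] False
      by (auto simp: hd_conv_nth)
    have lk: "\<forall>i. Suc i < length ch \<longrightarrow> (snd (ch ! i), fst (ch ! Suc i)) \<in> E"
    proof (intro allI impI)
      fix i assume "Suc i < length ch"
      then show "(snd (ch ! i), fst (ch ! Suc i)) \<in> E" using Cons.prems(3)[rule_format, of "Suc i"] by simp
    qed
    have IH: "\<bar>\<phi> (fst (hd ch)) - \<phi> (snd (last ch))\<bar> \<le> cost d ch" using Cons.IH False Cons.prems(2) lk by auto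
    have e: "\<phi> (snd x) = \<phi> (fst (hd ch))" using l0 assms(5) by auto
    have "\<bar>\<phi> (fst x) - \<phi> (snd (last ch))\<bar> \<le> \<bar>\<phi> (fst x) - \<phi> (snd x)\<bar> + \<bar>\<phi> (fst (hd ch)) - \<phi> (snd (last ch))\<bar>"
      using e by linarith
    then show ?thesis using IH x False by simp
  qed
qed

lemma qdist_phi:
  assumes "chain B E P Q ch0" "\<forall>p\<in>B. \<forall>q\<in>B. \<bar>\<phi> p - \<phi> q\<bar> \<le> d p q" "\<forall>(p,q)\<in>E. \<phi> p = \<phi> q"
    "\<forall>p\<in>P. \<phi> p = a" "\<forall>q\<in>Q. \<phi> q = b"
  shows "\<bar>a - b\<bar> \<le> qdist B d E P Q"
proof (rule qdist_ge[OF assms(1)])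
  fix ch assume c: "chain B E P Q ch"
  then have "\<bar>\<phi> (fst (hd ch)) - \<phi> (snd (last ch))\<bar> \<le> cost d ch"
    using chain_phi[OF _ _ _ assms(2,3)] unfolding chain_def by blast
  moreover have "\<phi> (fst (hd ch)) = a" "\<phi> (snd (last ch)) = b" using c assms(4,5) by (auto simp: chain_def)
  ultimately show "\<bar>a - b\<bar> \<le> cost d ch" by simp
qed



definition good :: "'x pt tms \<Rightarrow> bool" where
 "good Y \<longleftrightarrow> (\<forall>a\<in>car Y. \<forall>b\<in>car Y. 0 \<le> dst Y a b \<and> dst Y a b \<le> 1 \<and> dst Y a b = dst Y b a) \<and>
   (\<forall>a\<in>car Y. dst Y a a = 0) \<and>
   (\<forall>a\<in>car Y. \<forall>b\<in>car Y. \<forall>c\<in>car Y. dst Y a c \<le> dst Y a b + dst Y b c) \<and>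
   ptT Y \<in> car Y \<and> ptL Y \<in> car Y \<and> ptR Y \<in> car Y \<and>
   ptT Y \<noteq> ptL Y \<and> ptT Y \<noteq> ptR Y \<and> ptL Y \<noteq> ptR Y \<and>
   (\<forall>a\<in>car Y. a \<noteq> {}) \<and> (\<forall>a\<in>car Y. \<forall>b\<in>car Y. a \<noteq> b \<longrightarrow> a \<inter> b = {})"

lemma goodD:
  assumes "good Y"
  shows "\<And>a b. a \<in> car Y \<Longrightarrow> b \<in> car Y \<Longrightarrow> 0 \<le> dst Y a b"
    "\<And>a b. a \<in> car Y \<Longrightarrow> b \<in> car Y \<Longrightarrow> dst Y a b \<le> 1"
    "\<And>a b. a \<in> car Y \<Longrightarrow> b \<in> car Y \<Longrightarrow> dst Y a b = dst Y b a"
    "\<And>a. a \<in> car Y \<Longrightarrow> dst Y a a = 0"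
    "\<And>a b c. a \<in> car Y \<Longrightarrow> b \<in> car Y \<Longrightarrow> c \<in> car Y \<Longrightarrow> dst Y a c \<le> dst Y a b + dst Y b c"
    "ptT Y \<in> car Y" "ptL Y \<in> car Y" "ptR Y \<in> car Y"
    "ptT Y \<noteq> ptL Y" "ptT Y \<noteq> ptR Y" "ptL Y \<noteq> ptR Y"
    "\<And>a. a \<in> car Y \<Longrightarrow> a \<noteq> {}"
    "\<And>a b. a \<in> car Y \<Longrightarrow> b \<in> car Y \<Longrightarrow> a \<noteq> b \<Longrightarrow> a \<inter> b = {}"
  using assms unfolding good_def by auto

lemma tequiv_char:
  assumes "good Y"
  shows "tequiv Y = {(p,q). p \<in> tbase Y \<and> q \<in> tbase Y \<and> (p = q \<or> (p,q) \<in> tgen Y \<or> (q,p) \<in> tgen Y)}"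
proof -
  note g = goodD[OF assms]
  let ?R = "tgen Y \<union> (tgen Y)\<inverse>"
  have tr: "p = r" if "(p,q) \<in> ?R" "(q,r) \<in> ?R" for p q r
    using that g(9-11) unfolding tgen_def by (simp, elim disjE) auto
  have *: "(p,q) \<in> ?R^* \<Longrightarrow> p = q \<or> (p,q) \<in> ?R" for p q
  proof (induction rule: rtrancl_induct)
    case base then show ?case by simp
  next
    case (step y z)
    from step.IH show ?case
    proof
      assume "p = y" then show ?thesis using step.hyps(2) by simp
    next
      assume "(p,y) \<in> ?R"
      then show ?thesis using step.hyps(2) tr by blast
    qed
  qed
  show ?thesis
  proof (intro set_eqI iffI)
    fix pq assume "pq \<in> tequiv Y"
    then obtain p q where pq: "pq = (p,q)" "(p,q) \<in> ?R^*" "p \<in> tbase Y" "q \<in> tbase Y"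
      unfolding tequiv_def by auto
    show "pq \<in> {(p,q). p \<in> tbase Y \<and> q \<in> tbase Y \<and> (p = q \<or> (p,q) \<in> tgen Y \<or> (q,p) \<in> tgen Y)}"
      using *[OF pq(2)] pq(1,3,4) by blast
  next
    fix pq assume a: "pq \<in> {(p,q). p \<in> tbase Y \<and> q \<in> tbase Y \<and> (p = q \<or> (p,q) \<in> tgen Y \<or> (q,p) \<in> tgen Y)}"
    then obtain p q where pq: "pq = (p,q)" "p \<in> tbase Y" "q \<in> tbase Y" "p = q \<or> (p,q) \<in> tgen Y \<or> (q,p) \<in> tgen Y"
      by blast
    have "(p,q) \<in> ?R^*" using pq(4) by (elim disjE) (auto intro: r_into_rtrancl)
    then show "pq \<in> tequiv Y" using pq unfolding tequiv_def by simp
  qed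
qed

lemma tequiv_sym: "(p,q) \<in> tequiv Y \<Longrightarrow> (q,p) \<in> tequiv Y"
proof -
  assume a: "(p,q) \<in> tequiv Y"
  let ?R = "tgen Y \<union> (tgen Y)\<inverse>"
  have "(p,q) \<in> ?R^*" using a by (simp add: tequiv_def)
  then have "(q,p) \<in> (?R\<inverse>)^*" by (rule rtrancl_converseI)
  moreover have "?R\<inverse> = ?R" by auto
  ultimately show ?thesis using a by (simp add: tequiv_def)
qed

lemma tequiv_trans: "(p,q) \<in> tequiv Y \<Longrightarrow> (q,r) \<in> tequiv Y \<Longrightarrow> (p,r) \<in> tequiv Y"
  unfolding tequiv_def by (auto intro: rtrancl_trans)

lemma tequiv_refl: "p \<in> tbase Y \<Longrightarrow> (p,p) \<in> tequiv Y"
  unfolding tequiv_def by auto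

lemma tequiv_base: "(p,q) \<in> tequiv Y \<Longrightarrow> p \<in> tbase Y \<and> q \<in> tbase Y"
  unfolding tequiv_def by auto

lemma tcls_self: "p \<in> tbase Y \<Longrightarrow> p \<in> tcls Y p"
  unfolding tcls_def by (auto intro: tequiv_refl)

lemma tcls_eq: "(p,q) \<in> tequiv Y \<Longrightarrow> tcls Y p = tcls Y q"
  unfolding tcls_def by (auto intro: tequiv_trans tequiv_sym)

lemma tcls_mem: "q \<in> tcls Y p \<longleftrightarrow> (p,q) \<in> tequiv Y"
  unfolding tcls_def by auto

lemma tcls_conn: "\<forall>x\<in>tcls Y b. \<forall>y\<in>tcls Y b. (x,y) \<in> tequiv Y"
  unfolding tcls_def by (auto intro: tequiv_trans tequiv_sym)

lemma tbase_iff[simp]: "p \<in> tbase Y \<longleftrightarrow> snd p \<in> car Y"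
  by (cases p) (auto simp: tbase_def)

lemma tdist_facts:
  assumes "good Y" "p \<in> tbase Y" "q \<in> tbase Y" "r \<in> tbase Y"
  shows "0 \<le> tdist Y p q" "tdist Y p q \<le> 1" "tdist Y p q = tdist Y q p" "tdist Y p p = 0"
    "tdist Y p r \<le> tdist Y p q + tdist Y q r"
proof -
  note g = goodD[OF assms(1)]
  have c: "snd p \<in> car Y" "snd q \<in> car Y" "snd r \<in> car Y" using assms by auto
  show "0 \<le> tdist Y p q" "tdist Y p q \<le> 1" "tdist Y p q = tdist Y q p" "tdist Y p p = 0"
    using g(1,2,3)[OF c(1) c(2)] g(4)[OF c(1)] by (auto simp: tdist_def)
  show "tdist Y p r \<le> tdist Y p q + tdist Y q r"
    using g(1,2,5)[OF c(1) c(2)] g(1,2)[OF c(2) c(3)] g(1,2)[OF c(1) c(3)] g(5)[OF c(1) c(2) c(3)]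
    by (auto simp: tdist_def)
qed

definition QD :: "'x pt tms \<Rightarrow> Mlet \<times> 'x pt \<Rightarrow> Mlet \<times> 'x pt \<Rightarrow> real" where
  "QD Y a b = qdist (tbase Y) (tdist Y) (tequiv Y) (tcls Y a) (tcls Y b)"

lemma chain_single: "a \<in> tbase Y \<Longrightarrow> b \<in> tbase Y \<Longrightarrow> chain (tbase Y) (tequiv Y) (tcls Y a) (tcls Y b) [(a,b)]"
  unfolding chain_def by (auto intro: tcls_self)

lemma tdist_nonneg_all: "good Y \<Longrightarrow> \<forall>p\<in>tbase Y. \<forall>q\<in>tbase Y. 0 \<le> tdist Y p q"
  using tdist_facts(1) by blast

lemma QD_le_tdist: assumes "good Y" "a \<in> tbase Y" "b \<in> tbase Y" shows "QD Y a b \<le> tdist Y a b"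
  unfolding QD_def using qdist_le[OF chain_single[OF assms(2,3)] tdist_nonneg_all[OF assms(1)]] by simp

lemma QD_nonneg: assumes "good Y" "a \<in> tbase Y" "b \<in> tbase Y" shows "0 \<le> QD Y a b"
  unfolding QD_def using qdist_nonneg[OF chain_single[OF assms(2,3)] tdist_nonneg_all[OF assms(1)]] .

lemma QD_le1: assumes "good Y" "a \<in> tbase Y" "b \<in> tbase Y" shows "QD Y a b \<le> 1"
  using QD_le_tdist[OF assms] tdist_facts(2)[OF assms assms(3)] by linarith

lemma QD_refl: assumes "good Y" "a \<in> tbase Y" shows "QD Y a a = 0"
  using QD_le_tdist[OF assms assms(2)] QD_nonneg[OF assms assms(2)] tdist_facts(4)[OF assms assms(2) assms(2)] by linarith

lemma QD_tri: assumes "good Y" "a \<in> tbase Y" "b \<in> tbase Y" "c \<in> tbase Y" shows "QD Y a c \<le> QD Y a b + QD Y b c"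
  unfolding QD_def by (rule qdist_triangle[OF chain_single[OF assms(2,3)] chain_single[OF assms(3,4)] tcls_conn tdist_nonneg_all[OF assms(1)]])

lemma QD_cong1: "(a,a') \<in> tequiv Y \<Longrightarrow> QD Y a b = QD Y a' b"
  unfolding QD_def using tcls_eq by metis

lemma QD_cong2: "(b,b') \<in> tequiv Y \<Longrightarrow> QD Y a b = QD Y a b'"
  unfolding QD_def using tcls_eq by metis

lemma QD_phi:
  assumes "good Y" "a \<in> tbase Y" "b \<in> tbase Y"
    "\<And>p q. p \<in> tbase Y \<Longrightarrow> q \<in> tbase Y \<Longrightarrow> \<bar>\<phi> p - \<phi> q\<bar> \<le> tdist Y p q"
    "\<And>p q. (p,q) \<in> tequiv Y \<Longrightarrow> \<phi> p = \<phi> q"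
  shows "\<bar>\<phi> a - \<phi> b\<bar> \<le> QD Y a b"
proof -
  have 1: "\<forall>p\<in>tbase Y. \<forall>q\<in>tbase Y. \<bar>\<phi> p - \<phi> q\<bar> \<le> tdist Y p q" using assms(4) by blast
  have 2: "\<forall>(p,q)\<in>tequiv Y. \<phi> p = \<phi> q" using assms(5) by blast
  have 3: "\<forall>p\<in>tcls Y c. \<phi> p = \<phi> c" for c
  proof
    fix p assume "p \<in> tcls Y c" then show "\<phi> p = \<phi> c" using assms(5)[of c p] unfolding tcls_mem by simp
  qed
  show ?thesis unfolding QD_def by (rule qdist_phi[OF chain_single[OF assms(2,3)] 1 2 3[of a] 3[of b]])
qed

lemma QD_lip: assumes "good Y" "a \<in> tbase Y" "p \<in> tbase Y" "q \<in> tbase Y"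
  shows "\<bar>QD Y a p - QD Y a q\<bar> \<le> tdist Y p q"
  using QD_tri[OF assms(1,2,3,4)] QD_tri[OF assms(1,2,4,3)] QD_le_tdist[OF assms(1,3,4)]
    QD_le_tdist[OF assms(1,4,3)] tdist_facts(3)[OF assms(1,3,4,4)] by linarith

lemma QD_sym1: assumes "good Y" "a \<in> tbase Y" "b \<in> tbase Y" shows "QD Y b a \<le> QD Y a b"
proof -
  have "\<bar>QD Y b a - QD Y b b\<bar> \<le> QD Y a b"
  proof (rule QD_phi[OF assms])
    show "\<bar>QD Y b p - QD Y b q\<bar> \<le> tdist Y p q" if "p \<in> tbase Y" "q \<in> tbase Y" for p q
      using QD_lip[OF assms(1,3) that] .
    show "QD Y b p = QD Y b q" if "(p,q) \<in> tequiv Y" for p q using QD_cong2[OF that] .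
  qed
  then show ?thesis using QD_refl[OF assms(1,3)] by simp
qed

lemma QD_sym: "good Y \<Longrightarrow> a \<in> tbase Y \<Longrightarrow> b \<in> tbase Y \<Longrightarrow> QD Y a b = QD Y b a"
  using QD_sym1 by (metis order_antisym)

lemma tenc_mem: "u \<in> tenc C \<longleftrightarrow> (\<exists>m y w x. (m,y) \<in> C \<and> (w,x) \<in> y \<and> u = (m#w, x))"
  unfolding tenc_def prep_def by force

lemma tens1_inj:
  assumes "good Y" "y \<in> car Y" "y' \<in> car Y" "tens1 Y m y = tens1 Y m' y'"
  shows "((m,y),(m',y')) \<in> tequiv Y"
proof -
  note g = goodD[OF assms(1)]
  obtain w x where wx: "(w,x) \<in> y" using g(12)[OF assms(2)] by auto
  have "(m,y) \<in> tcls Y (m,y)" using assms(2) by (intro tcls_self) simp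
  then have "(m#w,x) \<in> tens1 Y m y" unfolding tens1_def tenc_mem using wx by blast
  then have "(m#w,x) \<in> tenc (tcls Y (m',y'))" using assms(4) by (simp add: tens1_def)
  then obtain y2 where y2: "(m,y2) \<in> tcls Y (m',y')" "(w,x) \<in> y2" unfolding tenc_mem by auto
  have "y2 \<in> car Y" using y2(1) tequiv_base unfolding tcls_mem by fastforce
  then have "y2 = y" using g(13)[OF assms(2)] wx y2(2) by blast
  then show ?thesis using y2(1) by (auto simp: tcls_mem intro: tequiv_sym)
qed

lemma tens1_eq: "((m,y),(m',y')) \<in> tequiv Y \<Longrightarrow> tens1 Y m y = tens1 Y m' y'"
  unfolding tens1_def using tcls_eq by metis

lemma tens1_eq_iff: "good Y \<Longrightarrow> y \<in> car Y \<Longrightarrow> y' \<in> car Y \<Longrightarrow>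
   tens1 Y m y = tens1 Y m' y' \<longleftrightarrow> ((m,y),(m',y')) \<in> tequiv Y"
  using tens1_inj tens1_eq by metis

lemma trep_tens1:
  assumes "good Y" "y \<in> car Y"
  shows "trep Y (tens1 Y m y) \<in> tbase Y" "(trep Y (tens1 Y m y), (m,y)) \<in> tequiv Y"
proof -
  have ex: "\<exists>p. p \<in> tbase Y \<and> tens1 Y m y = tens1 Y (fst p) (snd p)" using assms(2) by (intro exI[of _ "(m,y)"]) auto
  have p: "trep Y (tens1 Y m y) \<in> tbase Y \<and> tens1 Y m y = tens1 Y (fst (trep Y (tens1 Y m y))) (snd (trep Y (tens1 Y m y)))"
    unfolding trep_def by (rule someI_ex[OF ex])
  then show "trep Y (tens1 Y m y) \<in> tbase Y" by simp
  obtain mm yy where pp: "trep Y (tens1 Y m y) = (mm,yy)" by fastforce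
  from p have "((m,y), (mm,yy)) \<in> tequiv Y"
    using tens1_inj[OF assms(1,2), of yy m mm] unfolding pp by simp
  then show "(trep Y (tens1 Y m y), (m,y)) \<in> tequiv Y" by (simp add: tequiv_sym pp)
qed

lemma dst_Ften:
  assumes "good Y" "y \<in> car Y" "y' \<in> car Y"
  shows "dst (Ften Y) (tens1 Y m y) (tens1 Y m' y') = QD Y (m,y) (m',y')"
  unfolding Ften_def QD_def using tcls_eq[OF trep_tens1(2)[OF assms(1,2)]] tcls_eq[OF trep_tens1(2)[OF assms(1,3)]]
  by simp

lemma car_Ften: "\<alpha> \<in> car (Ften Y) \<longleftrightarrow> (\<exists>m y. y \<in> car Y \<and> \<alpha> = tens1 Y m y)"
  unfolding Ften_def by auto

lemma pts_Ften: "ptT (Ften Y) = tens1 Y Ma (ptT Y)" "ptL (Ften Y) = tens1 Y Mb (ptL Y)"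
   "ptR (Ften Y) = tens1 Y Mc (ptR Y)"
  unfolding Ften_def by simp_all

lemma tens1_ne: assumes "good Y" "y \<in> car Y" shows "tens1 Y m y \<noteq> {}"
proof -
  obtain w x where wx: "(w,x) \<in> y" using goodD(12)[OF assms] by auto
  have "(m,y) \<in> tcls Y (m,y)" using assms(2) by (intro tcls_self) simp
  then have "(m#w,x) \<in> tens1 Y m y" unfolding tens1_def tenc_mem using wx by blast
  then show ?thesis by auto
qed

lemma good_Ften: assumes "good Y" shows "good (Ften Y)"
proof -
  note g = goodD[OF assms]
  have tb: "\<And>m y. y \<in> car Y \<Longrightarrow> (m,y) \<in> tbase Y" by simp
  have met: "0 \<le> dst (Ften Y) a b \<and> dst (Ften Y) a b \<le> 1 \<and> dst (Ften Y) a b = dst (Ften Y) b a"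
    if H: "a \<in> car (Ften Y)" "b \<in> car (Ften Y)" for a b
  proof -
    obtain m y m' y' where a: "y \<in> car Y" "a = tens1 Y m y" and b: "y' \<in> car Y" "b = tens1 Y m' y'"
      using H(1,2) unfolding car_Ften by blast
    show ?thesis unfolding a b dst_Ften[OF assms a(1) b(1)] dst_Ften[OF assms b(1) a(1)]
      using QD_nonneg[OF assms, of "(m,y)" "(m',y')"] QD_le1[OF assms, of "(m,y)" "(m',y')"]
        QD_sym[OF assms, of "(m,y)" "(m',y')"] a b by simp
  qed
  have refl: "dst (Ften Y) a a = 0" if H: "a \<in> car (Ften Y)" for a
  proof -
    obtain m y where a: "y \<in> car Y" "a = tens1 Y m y" using H unfolding car_Ften by blast
    show ?thesis unfolding a dst_Ften[OF assms a(1) a(1)] using QD_refl[OF assms, of "(m,y)"] a by simp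
  qed
  have tri: "dst (Ften Y) a c \<le> dst (Ften Y) a b + dst (Ften Y) b c"
    if H: "a \<in> car (Ften Y)" "b \<in> car (Ften Y)" "c \<in> car (Ften Y)" for a b c
  proof -
    obtain m y m' y' m'' y'' where a: "y \<in> car Y" "a = tens1 Y m y" and b: "y' \<in> car Y" "b = tens1 Y m' y'"
      and c: "y'' \<in> car Y" "c = tens1 Y m'' y''"
      using H(1,2,3) unfolding car_Ften by blast
    show ?thesis unfolding a b c dst_Ften[OF assms a(1) b(1)] dst_Ften[OF assms b(1) c(1)] dst_Ften[OF assms a(1) c(1)]
      using QD_tri[OF assms, of "(m,y)" "(m',y')" "(m'',y'')"] a b c by simp
  qed
  have pts: "ptT (Ften Y) \<in> car (Ften Y)" "ptL (Ften Y) \<in> car (Ften Y)" "ptR (Ften Y) \<in> car (Ften Y)"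
    unfolding pts_Ften car_Ften using g(6-8) by blast+
  note ch = tequiv_char[OF assms]
  have dist: "ptT (Ften Y) \<noteq> ptL (Ften Y)" "ptT (Ften Y) \<noteq> ptR (Ften Y)" "ptL (Ften Y) \<noteq> ptR (Ften Y)"
    unfolding pts_Ften using g(6-11)
    by (simp_all add: tens1_eq_iff[OF assms] ch tgen_def)
  have ne: "a \<noteq> {}" if H: "a \<in> car (Ften Y)" for a
    using that tens1_ne[OF assms] unfolding car_Ften by auto
  have disj: "a \<inter> b = {}" if H: "a \<in> car (Ften Y)" "b \<in> car (Ften Y)" "a \<noteq> b" for a b
  proof (rule ccontr)
    assume "a \<inter> b \<noteq> {}"
    then obtain u where u: "u \<in> a" "u \<in> b" by auto
    obtain m y m' y' where a: "y \<in> car Y" "a = tens1 Y m y" and b: "y' \<in> car Y" "b = tens1 Y m' y'"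
      using H(1,2) unfolding car_Ften by blast
    obtain m1 y1 w1 x1 where 1: "(m1,y1) \<in> tcls Y (m,y)" "(w1,x1) \<in> y1" "u = (m1#w1,x1)"
      using u(1) unfolding a(2) tens1_def tenc_mem by blast
    obtain m2 y2 w2 x2 where 2: "(m2,y2) \<in> tcls Y (m',y')" "(w2,x2) \<in> y2" "u = (m2#w2,x2)"
      using u(2) unfolding b(2) tens1_def tenc_mem by blast
    have e1: "((m,y),(m1,y1)) \<in> tequiv Y" using 1(1) unfolding tcls_mem .
    have e2: "((m',y'),(m2,y2)) \<in> tequiv Y" using 2(1) unfolding tcls_mem .
    have c1: "y1 \<in> car Y" "y2 \<in> car Y" using tequiv_base[OF e1] tequiv_base[OF e2] by simp_all
    have "y1 = y2" using g(13)[OF c1] 1(2,3) 2(2,3) by blast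
    moreover have "m1 = m2" using 1(3) 2(3) by simp
    ultimately have "((m,y),(m',y')) \<in> tequiv Y" using e1 e2 tequiv_sym tequiv_trans by metis
    then have "tcls Y (m,y) = tcls Y (m',y')" by (rule tcls_eq)
    then have "a = b" using a b by (simp add: tens1_def)
    then show False using H(3) by simp
  qed
  show ?thesis unfolding good_def
    by (intro conjI ballI impI; (simp add: pts dist ne disj refl tri met)?)
qed



lemma good_lift: assumes "tripointed X" shows "good (lift X)"
proof -
  have X1: "\<And>x y. x \<in> car X \<Longrightarrow> y \<in> car X \<Longrightarrow> 0 \<le> dst X x y \<and> dst X x y \<le> 1 \<and> (dst X x y = 0 \<longleftrightarrow> x = y) \<and> dst X x y = dst X y x"
    using assms unfolding tripointed_def by simp
  have X2: "\<And>x y z. x \<in> car X \<Longrightarrow> y \<in> car X \<Longrightarrow> z \<in> car X \<Longrightarrow> dst X x z \<le> dst X x y + dst X y z"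
    using assms unfolding tripointed_def by simp
  have X3: "ptT X \<in> car X" "ptL X \<in> car X" "ptR X \<in> car X" "dst X (ptT X) (ptL X) = 1" "dst X (ptT X) (ptR X) = 1" "dst X (ptL X) (ptR X) = 1"
    using assms unfolding tripointed_def by simp_all
  have d: "ptT X \<noteq> ptL X" "ptT X \<noteq> ptR X" "ptL X \<noteq> ptR X"
    using X1[OF X3(1) X3(1)] X1[OF X3(2) X3(2)] X3(4-6) by auto
  show ?thesis unfolding good_def
    by (intro conjI ballI impI; (auto simp: lift_def X1 X3 d intro: X2)?)
qed

lemma tripointed_Itms: "tripointed Itms"
  unfolding tripointed_def Itms_def by auto

lemma Fpow_0[simp]: "Fpow X 0 = lift X" and Fpow_Suc[simp]: "Fpow X (Suc n) = Ften (Fpow X n)"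
  by (simp_all add: Fpow_def)

lemma good_Fpow: "tripointed X \<Longrightarrow> good (Fpow X n)"
  by (induction n) (simp_all add: good_lift good_Ften)

lemma tens_car: "x \<in> car X \<Longrightarrow> tens X w x \<in> car (Fpow X (length w))"
  by (induction w) (auto simp: lift_def car_Ften)

lemma car_Fpow: "\<alpha> \<in> car (Fpow X n) \<longleftrightarrow> (\<exists>w x. length w = n \<and> x \<in> car X \<and> \<alpha> = tens X w x)"
proof (induction n arbitrary: \<alpha>)
  case 0
  then show ?case by (auto simp: lift_def)
next
  case (Suc n)
  show ?case
  proof
    assume "\<alpha> \<in> car (Fpow X (Suc n))"
    then obtain m y where "y \<in> car (Fpow X n)" "\<alpha> = tens1 (Fpow X n) m y" by (auto simp: car_Ften)
    moreover obtain w x where "length w = n" "x \<in> car X" "y = tens X w x" using Suc.IH calculation(1) by blast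
    ultimately show "\<exists>w x. length w = Suc n \<and> x \<in> car X \<and> \<alpha> = tens X w x"
      by (intro exI[of _ "m # w"] exI[of _ x]) simp
  next
    assume "\<exists>w x. length w = Suc n \<and> x \<in> car X \<and> \<alpha> = tens X w x"
    then obtain w x where "length w = Suc n" "x \<in> car X" "\<alpha> = tens X w x" by blast
    then show "\<alpha> \<in> car (Fpow X (Suc n))" using tens_car by metis
  qed
qed

definition ptc :: "tri \<Rightarrow> 'a tms \<Rightarrow> 'a" where
  "ptc c Y = (case c of TT \<Rightarrow> ptT Y | LL \<Rightarrow> ptL Y | RR \<Rightarrow> ptR Y)"

definition mz :: "tri \<Rightarrow> Mlet" where
  "mz c = (case c of TT \<Rightarrow> Ma | LL \<Rightarrow> Mb | RR \<Rightarrow> Mc)"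

lemma ptc_Ften: "ptc c (Ften Y) = tens1 Y (mz c) (ptc c Y)"
  by (cases c) (simp_all add: ptc_def mz_def pts_Ften)

lemma ptc_lift: "ptc c (lift X) = {([], ptc c X)}"
  by (cases c) (simp_all add: ptc_def lift_def)

lemma ptc_Fpow: "ptc c (Fpow X n) = tens X (replicate n (mz c)) (ptc c X)"
  by (induction n) (simp_all add: ptc_lift ptc_Ften)

lemma ptc_car: "good Y \<Longrightarrow> ptc c Y \<in> car Y"
  using goodD(6-8)[of Y] by (cases c) (simp_all add: ptc_def)

lemma ptc_Itms[simp]: "ptc c Itms = c"
  by (cases c) (simp_all add: ptc_def Itms_def)

lemma ptcX_car: "tripointed X \<Longrightarrow> ptc c X \<in> car X"
  unfolding tripointed_def by (cases c) (simp_all add: ptc_def)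

lemma tgen_ptc: "tgen Y = {((Mb, ptc TT Y), (Ma, ptc LL Y)), ((Ma, ptc RR Y), (Mc, ptc TT Y)), ((Mc, ptc LL Y), (Mb, ptc RR Y))}"
  by (simp add: tgen_def ptc_def)

lemma ptc_distinct: "good Y \<Longrightarrow> ptc TT Y \<noteq> ptc LL Y \<and> ptc TT Y \<noteq> ptc RR Y \<and> ptc LL Y \<noteq> ptc RR Y"
  using goodD(9-11)[of Y] by (simp add: ptc_def)

lemma corner_unique:
  assumes "tripointed X" "x \<in> car X" "tens X v x = ptc c (Fpow X (length v))"
  shows "v = replicate (length v) (mz c)"
  using assms(3)
proof (induction v)
  case Nil then show ?case by simp
next
  case (Cons m u)
  let ?F = "Fpow X (length u)"
  have g: "good ?F" by (rule good_Fpow[OF assms(1)])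
  have "tens1 ?F m (tens X u x) = tens1 ?F (mz c) (ptc c ?F)"
    using Cons.prems by (simp add: ptc_Ften)
  then have "((m, tens X u x), (mz c, ptc c ?F)) \<in> tequiv ?F"
    using tens1_inj[OF g tens_car[OF assms(2)] ptc_car[OF g]] by blast
  then have "(m, tens X u x) = (mz c, ptc c ?F)"
    unfolding tequiv_char[OF g] tgen_ptc using ptc_distinct[OF g]
    by (cases c) (auto simp: mz_def)
  then show ?case using Cons.IH by simp
qed

definition fh :: "('a \<Rightarrow> 'b) \<Rightarrow> Mlet \<times> 'a \<Rightarrow> Mlet \<times> 'b" where
  "fh f p = (fst p, f (snd p))"

definition pmap :: "'x pt tms \<Rightarrow> 'y pt tms \<Rightarrow> ('x pt \<Rightarrow> 'y pt) \<Rightarrow> bool" where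
  "pmap Y Y' f \<longleftrightarrow> good Y \<and> good Y' \<and> (\<forall>y\<in>car Y. f y \<in> car Y') \<and>
     f (ptT Y) = ptT Y' \<and> f (ptL Y) = ptL Y' \<and> f (ptR Y) = ptR Y'"

lemma pmapD: assumes "pmap Y Y' f"
  shows "good Y" "good Y'" "\<And>y. y \<in> car Y \<Longrightarrow> f y \<in> car Y'" "\<And>c. f (ptc c Y) = ptc c Y'"
proof -
  show "good Y" "good Y'" "\<And>y. y \<in> car Y \<Longrightarrow> f y \<in> car Y'" using assms unfolding pmap_def by simp_all
  show "f (ptc c Y) = ptc c Y'" for c using assms unfolding pmap_def by (cases c) (simp_all add: ptc_def)
qed

lemma fh_base: "pmap Y Y' f \<Longrightarrow> p \<in> tbase Y \<Longrightarrow> fh f p \<in> tbase Y'"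
  using pmapD(3) by (simp add: fh_def)

lemma tgen_map: "pmap Y Y' f \<Longrightarrow> tgen Y' = map_prod (fh f) (fh f) ` tgen Y"
  unfolding tgen_ptc using pmapD(4)[of Y Y' f] by (simp add: fh_def)

lemma tequiv_map:
  assumes "pmap Y Y' f" "(p,q) \<in> tequiv Y"
  shows "(fh f p, fh f q) \<in> tequiv Y'"
proof -
  note P = pmapD[OF assms(1)]
  have b: "p \<in> tbase Y" "q \<in> tbase Y" using tequiv_base[OF assms(2)] by auto
  have "p = q \<or> (p,q) \<in> tgen Y \<or> (q,p) \<in> tgen Y" using assms(2) unfolding tequiv_char[OF P(1)] by simp
  then have "fh f p = fh f q \<or> (fh f p, fh f q) \<in> tgen Y' \<or> (fh f q, fh f p) \<in> tgen Y'"
    unfolding tgen_map[OF assms(1)] by force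
  then show ?thesis unfolding tequiv_char[OF P(2)] using fh_base[OF assms(1) b(1)] fh_base[OF assms(1) b(2)] by simp
qed

lemma Fmap_tens1:
  assumes "pmap Y Y' f" "y \<in> car Y"
  shows "Fmap Y Y' f (tens1 Y m y) = tens1 Y' m (f y)"
proof -
  note P = pmapD[OF assms(1)]
  have "(fh f (trep Y (tens1 Y m y)), fh f (m,y)) \<in> tequiv Y'"
    by (rule tequiv_map[OF assms(1) trep_tens1(2)[OF P(1) assms(2)]])
  then have "tens1 Y' (fst (trep Y (tens1 Y m y))) (f (snd (trep Y (tens1 Y m y)))) = tens1 Y' m (f y)"
    using tens1_eq unfolding fh_def by (metis fst_conv snd_conv)
  then show ?thesis unfolding Fmap_def .
qed

lemma pmap_Fmap: assumes "pmap Y Y' f" shows "pmap (Ften Y) (Ften Y') (Fmap Y Y' f)"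
proof -
  note P = pmapD[OF assms]
  have "\<forall>a\<in>car (Ften Y). Fmap Y Y' f a \<in> car (Ften Y')"
  proof
    fix a assume "a \<in> car (Ften Y)"
    then obtain m y where y: "y \<in> car Y" "a = tens1 Y m y" unfolding car_Ften by blast
    show "Fmap Y Y' f a \<in> car (Ften Y')" unfolding car_Ften y(2) Fmap_tens1[OF assms y(1)]
      using P(3)[OF y(1)] by blast
  qed
  moreover have "Fmap Y Y' f (ptc c (Ften Y)) = ptc c (Ften Y')" for c
    unfolding ptc_Ften using Fmap_tens1[OF assms ptc_car[OF P(1)]] P(4) by simp
  ultimately show ?thesis unfolding pmap_def using good_Ften[OF P(1)] good_Ften[OF P(2)]
    by (metis ptc_def tri.simps(7,8,9))
qed

lemma tdist_map: "pmap Y Y' f \<Longrightarrow> (\<forall>a\<in>car Y. \<forall>b\<in>car Y. dst Y' (f a) (f b) = dst Y a b) \<Longrightarrow>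
   p \<in> tbase Y \<Longrightarrow> q \<in> tbase Y \<Longrightarrow> tdist Y' (fh f p) (fh f q) = tdist Y p q"
  by (simp add: tdist_def fh_def)

lemma QD_map:
  assumes "pmap Y Y' f" "\<forall>a\<in>car Y. \<forall>b\<in>car Y. dst Y' (f a) (f b) = dst Y a b"
    "a \<in> tbase Y" "b \<in> tbase Y"
  shows "QD Y' (fh f a) (fh f b) = QD Y a b"
proof -
  note P = pmapD[OF assms(1)]
  have fa: "fh f a \<in> tbase Y'" "fh f b \<in> tbase Y'" using fh_base[OF assms(1)] assms(3,4) by auto
  let ?mp = "map_prod (fh f) (fh f)"
  have cost_map: "cost (tdist Y') (map ?mp ch) = cost (tdist Y) ch" if "set ch \<subseteq> tbase Y \<times> tbase Y" for ch
    using that by (induction ch) (auto simp: tdist_map[OF assms(1,2)])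
  have chain_map: "chain (tbase Y') (tequiv Y') (tcls Y' (fh f a)) (tcls Y' (fh f b)) (map ?mp ch)"
    if c: "chain (tbase Y) (tequiv Y) (tcls Y a) (tcls Y b) ch" for ch
  proof -
    have ne: "ch \<noteq> []" and s: "set ch \<subseteq> tbase Y \<times> tbase Y" and h: "(a, fst (hd ch)) \<in> tequiv Y"
      and l: "(b, snd (last ch)) \<in> tequiv Y"
      and k: "\<And>i. Suc i < length ch \<Longrightarrow> (snd (ch ! i), fst (ch ! Suc i)) \<in> tequiv Y"
      using c unfolding chain_def tcls_mem by auto
    have "set (map ?mp ch) \<subseteq> tbase Y' \<times> tbase Y'" using s fh_base[OF assms(1)] by auto
    moreover have "fst (hd (map ?mp ch)) \<in> tcls Y' (fh f a)"
      using tequiv_map[OF assms(1) h] ne by (simp add: tcls_mem hd_map)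
    moreover have "snd (last (map ?mp ch)) \<in> tcls Y' (fh f b)"
      using tequiv_map[OF assms(1) l] ne by (simp add: tcls_mem last_map)
    moreover have "(snd (map ?mp ch ! i), fst (map ?mp ch ! Suc i)) \<in> tequiv Y'" if "Suc i < length (map ?mp ch)" for i
      using tequiv_map[OF assms(1) k[of i]] that by simp
    ultimately show ?thesis using ne unfolding chain_def by simp
  qed
  have le: "QD Y' (fh f a) (fh f b) \<le> QD Y a b"
    unfolding QD_def
  proof (rule qdist_ge[OF chain_single[OF assms(3,4)]])
    fix ch assume c: "chain (tbase Y) (tequiv Y) (tcls Y a) (tcls Y b) ch"
    have "qdist (tbase Y') (tdist Y') (tequiv Y') (tcls Y' (fh f a)) (tcls Y' (fh f b)) \<le> cost (tdist Y') (map ?mp ch)"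
      by (rule qdist_le[OF chain_map[OF c] tdist_nonneg_all[OF P(2)]])
    also have "\<dots> = cost (tdist Y) ch" using c cost_map unfolding chain_def by blast
    finally show "qdist (tbase Y') (tdist Y') (tequiv Y') (tcls Y' (fh f a)) (tcls Y' (fh f b)) \<le> cost (tdist Y) ch" .
  qed
  define S where "S p' = (\<lambda>q. QD Y a q + tdist Y' (fh f q) p') ` tbase Y" for p'
  define \<phi> where "\<phi> p' = Inf (S p')" for p'
  have ne: "S p' \<noteq> {}" for p'
  proof -
    have "(Ma, ptT Y) \<in> tbase Y" using goodD(6)[OF P(1)] by simp
    then show ?thesis unfolding S_def by blast
  qed
  have bdd: "bdd_below (S p')" if "p' \<in> tbase Y'" for p'
    unfolding S_def
    by (rule bdd_belowI[where m=0])
       (use QD_nonneg[OF P(1) assms(3)] tdist_facts(1)[OF P(2) fh_base[OF assms(1)] that that] in force)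
  have phi_le: "\<phi> p' \<le> QD Y a q + tdist Y' (fh f q) p'" if "p' \<in> tbase Y'" "q \<in> tbase Y" for p' q
    unfolding \<phi>_def by (rule cInf_lower[OF _ bdd[OF that(1)]]) (use that in \<open>auto simp: S_def\<close>)
  have phi_ge: "c \<le> \<phi> p'" if "\<And>q. q \<in> tbase Y \<Longrightarrow> c \<le> QD Y a q + tdist Y' (fh f q) p'" for c p'
    unfolding \<phi>_def by (rule cInf_greatest[OF ne]) (use that in \<open>auto simp: S_def\<close>)
  have lip1: "\<phi> p' \<le> \<phi> r' + tdist Y' r' p'" if "p' \<in> tbase Y'" "r' \<in> tbase Y'" for p' r'
  proof -
    have "\<phi> p' - tdist Y' r' p' \<le> \<phi> r'"
    proof (rule phi_ge)
      fix q assume q: "q \<in> tbase Y"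
      have "\<phi> p' \<le> QD Y a q + tdist Y' (fh f q) p'" by (rule phi_le[OF that(1) q])
      moreover have "tdist Y' (fh f q) p' \<le> tdist Y' (fh f q) r' + tdist Y' r' p'"
        by (rule tdist_facts(5)[OF P(2) fh_base[OF assms(1) q] that(2) that(1)])
      ultimately show "\<phi> p' - tdist Y' r' p' \<le> QD Y a q + tdist Y' (fh f q) r'" by linarith
    qed
    then show ?thesis by linarith
  qed
  have lip: "\<bar>\<phi> p' - \<phi> r'\<bar> \<le> tdist Y' p' r'" if "p' \<in> tbase Y'" "r' \<in> tbase Y'" for p' r'
    using lip1[OF that] lip1[OF that(2,1)] tdist_facts(3)[OF P(2) that that(2)] by linarith
  have phi_fh: "\<phi> (fh f q0) = QD Y a q0" if q0: "q0 \<in> tbase Y" for q0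
  proof (rule antisym)
    show "\<phi> (fh f q0) \<le> QD Y a q0"
      using phi_le[OF fh_base[OF assms(1) q0] q0] tdist_facts(4)[OF P(2) fh_base[OF assms(1) q0] fh_base[OF assms(1) q0] fh_base[OF assms(1) q0]]
      by simp
    show "QD Y a q0 \<le> \<phi> (fh f q0)"
    proof (rule phi_ge)
      fix q assume q: "q \<in> tbase Y"
      show "QD Y a q0 \<le> QD Y a q + tdist Y' (fh f q) (fh f q0)"
        using QD_lip[OF P(1) assms(3) q q0] tdist_map[OF assms(1,2) q q0] by linarith
    qed
  qed
  have const: "\<phi> p' = \<phi> r'" if "(p',r') \<in> tequiv Y'" for p' r'
  proof -
    have "p' = r' \<or> (p',r') \<in> tgen Y' \<or> (r',p') \<in> tgen Y'" using that unfolding tequiv_char[OF P(2)] by simp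
    moreover have "\<phi> (fh f p) = \<phi> (fh f r)" if "(p,r) \<in> tgen Y" for p r
    proof -
      have "(p,r) \<in> tequiv Y" using that ptc_car[OF P(1)] unfolding tequiv_char[OF P(1)] tgen_ptc by auto
      then show ?thesis using phi_fh tequiv_base QD_cong2 by metis
    qed
    ultimately show ?thesis unfolding tgen_map[OF assms(1)] by force
  qed
  have "\<bar>\<phi> (fh f a) - \<phi> (fh f b)\<bar> \<le> QD Y' (fh f a) (fh f b)"
    by (rule QD_phi[OF P(2) fa lip const])
  then have "QD Y a b \<le> QD Y' (fh f a) (fh f b)"
    using phi_fh[OF assms(3)] phi_fh[OF assms(4)] QD_refl[OF P(1) assms(3)] QD_nonneg[OF P(1) assms(3,4)] by simp
  then show ?thesis using le by simp
qed

lemma Fmap_iso: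
  assumes "pmap Y Y' f" "\<forall>a\<in>car Y. \<forall>b\<in>car Y. dst Y' (f a) (f b) = dst Y a b"
  shows "\<forall>a\<in>car (Ften Y). \<forall>b\<in>car (Ften Y). dst (Ften Y') (Fmap Y Y' f a) (Fmap Y Y' f b) = dst (Ften Y) a b"
proof (intro ballI)
  note P = pmapD[OF assms(1)]
  fix a b assume "a \<in> car (Ften Y)" "b \<in> car (Ften Y)"
  then obtain m y m' y' where a: "y \<in> car Y" "a = tens1 Y m y" and b: "y' \<in> car Y" "b = tens1 Y m' y'"
    unfolding car_Ften by blast
  have "QD Y' (fh f (m,y)) (fh f (m',y')) = QD Y (m,y) (m',y')"
    by (rule QD_map[OF assms]) (use a b in simp_all)
  then show "dst (Ften Y') (Fmap Y Y' f a) (Fmap Y Y' f b) = dst (Ften Y) a b"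
    unfolding a b Fmap_tens1[OF assms(1) a(1)] Fmap_tens1[OF assms(1) b(1)]
      dst_Ften[OF P(2) P(3)[OF a(1)] P(3)[OF b(1)]] dst_Ften[OF P(1) a(1) b(1)]
    by (simp add: fh_def)
qed



abbreviation "FI n \<equiv> Fpow Itms n"
abbreviation "tI w z \<equiv> tens Itms w z"

lemma good_FI: "good (FI n)" by (rule good_Fpow[OF tripointed_Itms])

lemma car_Itms[simp]: "car Itms = UNIV" by (simp add: Itms_def)

lemma tI_car: "tI w z \<in> car (FI (length w))" using tens_car[of z Itms w] by simp

lemma car_FI: "\<alpha> \<in> car (FI n) \<longleftrightarrow> (\<exists>w z. length w = n \<and> \<alpha> = tI w z)"
  unfolding car_Fpow by simp

lemma ptc_FI: "ptc c (FI n) = tI (replicate n (mz c)) c"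
  by (simp add: ptc_Fpow)

lemma pmapI: "good Y \<Longrightarrow> good Y' \<Longrightarrow> (\<And>y. y \<in> car Y \<Longrightarrow> f y \<in> car Y') \<Longrightarrow> (\<And>c. f (ptc c Y) = ptc c Y') \<Longrightarrow> pmap Y Y' f"
  unfolding pmap_def by (metis ptc_def tri.simps(7,8,9))

lemma bang_eq: "bang z = tens1 (lift Itms) (mz z) {([],z)}"
  by (simp add: bang_def mz_def)

lemma emap_tens: "length w = k \<Longrightarrow> emap Itms bang k (tI w z) = tI (w @ [mz z]) z"
proof (induction k arbitrary: w z)
  case 0 then show ?case by (simp add: bang_eq)
next
  case (Suc k)
  then obtain m v where w: "w = m # v" "length v = k" by (cases w) auto
  have pm: "pmap (FI k) (FI (Suc k)) (emap Itms bang k)"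
  proof (rule pmapI[OF good_FI good_FI])
    fix y assume "y \<in> car (FI k)"
    then obtain w' z' where "length w' = k" "y = tI w' z'" unfolding car_FI by blast
    then show "emap Itms bang k y \<in> car (FI (Suc k))" using Suc.IH tI_car by (metis length_append_singleton)
  next
    fix c show "emap Itms bang k (ptc c (FI k)) = ptc c (FI (Suc k))"
      unfolding ptc_FI using Suc.IH[of "replicate k (mz c)" c] by (simp add: replicate_append_same)
  qed
  have "emap Itms bang (Suc k) (tI w z) = Fmap (FI k) (FI (Suc k)) (emap Itms bang k) (tens1 (FI k) m (tI v z))"
    using w by simp
  also have "\<dots> = tens1 (FI (Suc k)) m (emap Itms bang k (tI v z))"
    using Fmap_tens1[OF pm] tI_car w(2) by metis
  also have "\<dots> = tI (w @ [mz z]) z" using Suc.IH[OF w(2)] w by simp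
  finally show ?case .
qed

lemma pmap_emap: "pmap (FI k) (FI (Suc k)) (emap Itms bang k)"
proof (rule pmapI[OF good_FI good_FI])
  fix y assume "y \<in> car (FI k)"
  then obtain w' z' where "length w' = k" "y = tI w' z'" unfolding car_FI by blast
  then show "emap Itms bang k y \<in> car (FI (Suc k))" using emap_tens tI_car by (metis length_append_singleton)
next
  fix c show "emap Itms bang k (ptc c (FI k)) = ptc c (FI (Suc k))"
    unfolding ptc_FI using emap_tens[of "replicate k (mz c)" k c] by (simp add: replicate_append_same)
qed

definition psi :: "tri \<Rightarrow> Mlet \<Rightarrow> tri \<Rightarrow> real" where
  "psi z m c = (if m = mz z \<and> c = z then 0 else if m = mz c then 1 else 1/2)"

lemma psi_lip: "\<bar>psi z m c - psi z m' c'\<bar> \<le> (if m = m' then (if c = c' then 0 else 1) / 2 else 1)"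
  by (cases z; cases m; cases m'; cases c; cases c') (simp_all add: psi_def mz_def)

lemma psi_glue: "psi z Mb TT = psi z Ma LL" "psi z Ma RR = psi z Mc TT" "psi z Mc LL = psi z Mb RR"
  by (cases z; simp add: psi_def mz_def)+

lemma car_lift_I: "a \<in> car (lift Itms) \<longleftrightarrow> (\<exists>c. a = {([],c)})"
  by (auto simp: lift_def)

lemma bang_iso: "dst (Ften (lift Itms)) (bang z) (bang z') = (if z = z' then 0 else 1)"
proof -
  have g: "good (lift Itms)" using good_FI[of 0] by simp
  have b: "(mz z, {([],z)}) \<in> tbase (lift Itms)" "(mz z', {([],z')}) \<in> tbase (lift Itms)"
    by (auto simp: car_lift_I)
  have "dst (Ften (lift Itms)) (bang z) (bang z') = QD (lift Itms) (mz z, {([],z)}) (mz z', {([],z')})"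
    unfolding bang_eq by (rule dst_Ften[OF g]) (auto simp: car_lift_I)
  moreover have "QD (lift Itms) (mz z, {([],z)}) (mz z', {([],z')}) = 1" if ne: "z \<noteq> z'"
  proof (rule antisym)
    show "QD (lift Itms) (mz z, {([],z)}) (mz z', {([],z')}) \<le> 1" by (rule QD_le1[OF g b])
    define \<phi> where "\<phi> p = psi z (fst p) (snd (the_elem (snd p)))" for p :: "Mlet \<times> tri pt"
    have "\<bar>\<phi> (mz z, {([],z)}) - \<phi> (mz z', {([],z')})\<bar> \<le> QD (lift Itms) (mz z, {([],z)}) (mz z', {([],z')})"
    proof (rule QD_phi[OF g b])
      fix p q assume "p \<in> tbase (lift Itms)" "q \<in> tbase (lift Itms)"
      then obtain m c m' c' where pq: "p = (m, {([],c)})" "q = (m', {([],c')})"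
        by (cases p, cases q) (auto simp: car_lift_I)
      show "\<bar>\<phi> p - \<phi> q\<bar> \<le> tdist (lift Itms) p q"
        unfolding pq \<phi>_def using psi_lip[of z m c m' c']
        by (cases "m = m'"; cases "c = c'") (simp_all add: tdist_def lift_def Itms_def)
    next
      fix p q assume "(p,q) \<in> tequiv (lift Itms)"
      then have "p = q \<or> (p,q) \<in> tgen (lift Itms) \<or> (q,p) \<in> tgen (lift Itms)"
        unfolding tequiv_char[OF g] by simp
      then show "\<phi> p = \<phi> q"
        unfolding tgen_def using psi_glue[of z] by (auto simp: \<phi>_def lift_def Itms_def)
    qed
    moreover have "\<bar>\<phi> (mz z, {([],z)}) - \<phi> (mz z', {([],z')})\<bar> = 1"
      using ne by (cases z; cases z') (simp_all add: \<phi>_def psi_def mz_def)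
    ultimately show "1 \<le> QD (lift Itms) (mz z, {([],z)}) (mz z', {([],z')})" by simp
  qed
  ultimately show ?thesis using QD_refl[OF g b(1)] by auto
qed

lemma emap_iso: "\<forall>a\<in>car (FI k). \<forall>b\<in>car (FI k). dst (FI (Suc k)) (emap Itms bang k a) (emap Itms bang k b) = dst (FI k) a b"
proof (induction k)
  case 0
  show ?case
  proof (intro ballI)
    fix a b assume "a \<in> car (FI 0)" "b \<in> car (FI 0)"
    then obtain c c' where ab: "a = {([],c)}" "b = {([],c')}" by (auto simp: car_lift_I)
    show "dst (FI (Suc 0)) (emap Itms bang 0 a) (emap Itms bang 0 b) = dst (FI 0) a b"
      unfolding ab using bang_iso[of c c'] by (simp add: lift_def Itms_def)
  qed
next
  case (Suc k)
  show ?case using Fmap_iso[OF pmap_emap Suc.IH] by simp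
qed

lemma Gembs_car: "\<alpha> \<in> car (FI n) \<Longrightarrow> Gembs n j \<alpha> \<in> car (FI (n + j))"
proof (induction j)
  case 0 then show ?case by simp
next
  case (Suc j) then show ?case using pmapD(3)[OF pmap_emap] by simp
qed

lemma Gembs_iso: "\<alpha> \<in> car (FI n) \<Longrightarrow> \<beta> \<in> car (FI n) \<Longrightarrow> dst (FI (n + j)) (Gembs n j \<alpha>) (Gembs n j \<beta>) = dst (FI n) \<alpha> \<beta>"
proof (induction j)
  case 0 then show ?case by simp
next
  case (Suc j) then show ?case using emap_iso[of "n + j"] Gembs_car by simp
qed

lemma Gembs_add: "Gembs n (i + j) \<alpha> = Gembs (n + i) j (Gembs n i \<alpha>)"
  by (induction j) (simp_all add: add.assoc)

lemma Gembs_tens: "length w = n \<Longrightarrow> Gembs n j (tI w z) = tI (w @ replicate j (mz z)) z"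
proof (induction j)
  case 0 then show ?case by simp
next
  case (Suc j)
  have "Gembs n (Suc j) (tI w z) = emap Itms bang (n + j) (tI (w @ replicate j (mz z)) z)" using Suc by simp
  also have "\<dots> = tI (w @ replicate j (mz z) @ [mz z]) z" using emap_tens Suc.prems by simp
  also have "\<dots> = tI (w @ replicate (Suc j) (mz z)) z" by (simp add: replicate_append_same)
  finally show ?case .
qed

definition emb :: "nat \<Rightarrow> nat \<Rightarrow> tri pt \<Rightarrow> tri pt" where
  "emb a b x = Gembs a (b - a) x"

lemma emb_trans: "a \<le> b \<Longrightarrow> b \<le> c \<Longrightarrow> emb b c (emb a b x) = emb a c x"
  unfolding emb_def using Gembs_add[of a "b - a" "c - b" x] by simp

lemma emb_car: "a \<le> b \<Longrightarrow> x \<in> car (FI a) \<Longrightarrow> emb a b x \<in> car (FI b)"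
  unfolding emb_def using Gembs_car[of x a "b - a"] by simp

lemma emb_iso: "a \<le> b \<Longrightarrow> x \<in> car (FI a) \<Longrightarrow> y \<in> car (FI a) \<Longrightarrow> dst (FI b) (emb a b x) (emb a b y) = dst (FI a) x y"
  unfolding emb_def using Gembs_iso[of x a y "b - a"] by simp

lemma emb_refl[simp]: "emb a a x = x" by (simp add: emb_def)

lemma emb_tens: "length w = a \<Longrightarrow> a \<le> b \<Longrightarrow> emb a b (tI w z) = tI (w @ replicate (b - a) (mz z)) z"
  unfolding emb_def by (rule Gembs_tens)

lemma Grel_iff: "((n,\<alpha>),(k,\<beta>)) \<in> Grel \<longleftrightarrow> \<alpha> \<in> car (FI n) \<and> \<beta> \<in> car (FI k) \<and> (\<exists>N\<ge>max n k. emb n N \<alpha> = emb k N \<beta>)"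
  unfolding Grel_def emb_def by simp

lemma Gcls_self: "\<alpha> \<in> car (FI n) \<Longrightarrow> (n,\<alpha>) \<in> Gcls n \<alpha>"
  unfolding Gcls_def using Grel_iff by fastforce

lemma level_change:
  assumes "\<alpha> \<in> car (FI n)" "\<beta> \<in> car (FI k)" "n \<le> M" "k \<le> M" "M \<le> M'"
  shows "dst (FI M) (emb n M \<alpha>) (emb k M \<beta>) = dst (FI M') (emb n M' \<alpha>) (emb k M' \<beta>)"
proof -
  have "emb n M' \<alpha> = emb M M' (emb n M \<alpha>)" "emb k M' \<beta> = emb M M' (emb k M \<beta>)"
    using emb_trans assms by metis+
  then show ?thesis using emb_iso[OF assms(5) emb_car[OF assms(3,1)] emb_car[OF assms(4,2)]] by simp
qed

lemma WD:
  assumes "\<alpha>0 \<in> car (FI n0)" "\<beta>0 \<in> car (FI k0)" "n0 \<le> N" "k0 \<le> N"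
  shows "dG (Gcls n0 \<alpha>0) (Gcls k0 \<beta>0) = dst (FI N) (emb n0 N \<alpha>0) (emb k0 N \<beta>0)"
proof -
  let ?P = "\<lambda>r. \<exists>(n, \<alpha>)\<in>Gcls n0 \<alpha>0. \<exists>(k, \<beta>)\<in>Gcls k0 \<beta>0.
       r = dst (FI (max n k)) (Gembs n (max n k - n) \<alpha>) (Gembs k (max n k - k) \<beta>)"
  have ex: "\<exists>r. ?P r" using Gcls_self[OF assms(1)] Gcls_self[OF assms(2)] by blast
  have "?P (dG (Gcls n0 \<alpha>0) (Gcls k0 \<beta>0))" unfolding dG_def by (rule someI_ex[OF ex])
  then obtain n \<alpha> k \<beta> where a: "(n,\<alpha>) \<in> Gcls n0 \<alpha>0" and b: "(k,\<beta>) \<in> Gcls k0 \<beta>0"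
    and r: "dG (Gcls n0 \<alpha>0) (Gcls k0 \<beta>0) = dst (FI (max n k)) (emb n (max n k) \<alpha>) (emb k (max n k) \<beta>)"
    unfolding emb_def by blast
  from a obtain N1 where a1: "\<alpha> \<in> car (FI n)" "N1 \<ge> max n0 n" "emb n0 N1 \<alpha>0 = emb n N1 \<alpha>"
    unfolding Gcls_def Image_singleton_iff Grel_iff by blast
  from b obtain N2 where b1: "\<beta> \<in> car (FI k)" "N2 \<ge> max k0 k" "emb k0 N2 \<beta>0 = emb k N2 \<beta>"
    unfolding Gcls_def Image_singleton_iff Grel_iff by blast
  define NS where "NS = max N (max N1 N2)"
  have le: "N1 \<le> NS" "N2 \<le> NS" "N \<le> NS" "max n k \<le> NS" using a1 b1 by (auto simp: NS_def)
  have "dG (Gcls n0 \<alpha>0) (Gcls k0 \<beta>0) = dst (FI NS) (emb n NS \<alpha>) (emb k NS \<beta>)"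
    unfolding r by (rule level_change[OF a1(1) b1(1)]) (use le in auto)
  also have "emb n NS \<alpha> = emb n0 NS \<alpha>0"
    using emb_trans[of n N1 NS \<alpha>] emb_trans[of n0 N1 NS \<alpha>0] a1 le by simp
  also have "emb k NS \<beta> = emb k0 NS \<beta>0"
    using emb_trans[of k N2 NS \<beta>] emb_trans[of k0 N2 NS \<beta>0] b1 le by simp
  also have "dst (FI NS) (emb n0 NS \<alpha>0) (emb k0 NS \<beta>0) = dst (FI N) (emb n0 N \<alpha>0) (emb k0 N \<beta>0)"
    by (rule level_change[symmetric, OF assms]) (use le in auto)
  finally show ?thesis .
qed

lemma Gpts_iff: "g \<in> Gpts \<longleftrightarrow> (\<exists>n \<alpha>. \<alpha> \<in> car (FI n) \<and> g = Gcls n \<alpha>)"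
  unfolding Gpts_def by blast

lemma dG_props:
  assumes "g \<in> Gpts" "h \<in> Gpts" "k \<in> Gpts"
  shows "0 \<le> dG g h" "dG g g = 0" "dG g h = dG h g" "dG g k \<le> dG g h + dG h k"
proof -
  obtain n1 a1 where 1: "a1 \<in> car (FI n1)" "g = Gcls n1 a1" using assms(1) Gpts_iff by blast
  obtain n2 a2 where 2: "a2 \<in> car (FI n2)" "h = Gcls n2 a2" using assms(2) Gpts_iff by blast
  obtain n3 a3 where 3: "a3 \<in> car (FI n3)" "k = Gcls n3 a3" using assms(3) Gpts_iff by blast
  define N where "N = max n1 (max n2 n3)"
  have le: "n1 \<le> N" "n2 \<le> N" "n3 \<le> N" by (auto simp: N_def)
  note c = emb_car[OF le(1) 1(1)] emb_car[OF le(2) 2(1)] emb_car[OF le(3) 3(1)]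
  note G = goodD[OF good_FI[of N]]
  show "0 \<le> dG g h" unfolding 1 2 WD[OF 1(1) 2(1) le(1,2)] using G(1) c by simp
  show "dG g g = 0" unfolding 1 WD[OF 1(1) 1(1) le(1,1)] using G(4) c by simp
  show "dG g h = dG h g" unfolding 1 2 WD[OF 1(1) 2(1) le(1,2)] WD[OF 2(1) 1(1) le(2,1)] using G(3) c by simp
  show "dG g k \<le> dG g h + dG h k" unfolding 1 2 3 WD[OF 1(1) 2(1) le(1,2)] WD[OF 2(1) 3(1) le(2,3)]
     WD[OF 1(1) 3(1) le(1,3)] using G(5) c by simp
qed



lemma D1: assumes "good Y" "y \<in> car Y" "y' \<in> car Y"
  shows "dst (Ften Y) (tens1 Y m y) (tens1 Y m y') \<le> dst Y y y' / 2"
  using dst_Ften[OF assms] QD_le_tdist[OF assms(1), of "(m,y)" "(m,y')"] assms(2,3)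
  by (simp add: tdist_def)

lemma SW: "length u' = length u \<Longrightarrow>
  dst (FI (length w + length u)) (tI (w @ u) z) (tI (w @ u') z') \<le> (1/2) ^ length w"
proof (induction w)
  case Nil
  have u': "tI u' z' \<in> car (FI (length u))" using tI_car[of u' z'] Nil by simp
  show ?case using goodD(2)[OF good_FI tI_car[of u z] u'] by simp
next
  case (Cons m w)
  have l: "length (w @ u') = length (w @ u)" using Cons.prems by simp
  have "dst (FI (length (m # w) + length u)) (tI ((m # w) @ u) z) (tI ((m # w) @ u') z')
      = dst (Ften (FI (length (w @ u)))) (tens1 (FI (length (w @ u))) m (tI (w @ u) z)) (tens1 (FI (length (w @ u))) m (tI (w @ u') z'))"
    using l by simp
  also have "\<dots> \<le> dst (FI (length (w @ u))) (tI (w @ u) z) (tI (w @ u') z') / 2"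
    by (rule D1[OF good_FI tI_car]) (use tI_car[of "w @ u'" z'] l in simp)
  also have "\<dots> \<le> (1/2) ^ length w / 2" using Cons.IH[OF Cons.prems] by simp
  finally show ?case by simp
qed

lemma SW0: "length v = n \<Longrightarrow> dst (FI n) (tI v z) (tI v z') \<le> (1/2) ^ n"
  using SW[of "[]" "[]" v z z'] by simp

lemma corner_dist:
  assumes "tripointed X" "x \<in> car X" "length v = n" "tens X v x = ptc c (Fpow X n)"
  shows "dst (FI n) (tI v z) (ptc c (FI n)) \<le> (1/2) ^ n"
proof -
  have "v = replicate n (mz c)" using corner_unique[OF assms(1,2)] assms(3,4) by blast
  then show ?thesis unfolding ptc_FI using SW0[of v n z c] assms(3) by simp
qed

definition glueset :: "(Mlet \<times> tri \<times> Mlet \<times> tri) set" where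
  "glueset = {(Mb,TT,Ma,LL), (Ma,RR,Mc,TT), (Mc,LL,Mb,RR), (Ma,LL,Mb,TT), (Mc,TT,Ma,RR), (Mb,RR,Mc,LL)}"

lemma glue_eq: assumes "good Y" "(m,c1,m',c2) \<in> glueset"
  shows "tens1 Y m (ptc c1 Y) = tens1 Y m' (ptc c2 Y)"
proof (rule tens1_eq)
  show "((m, ptc c1 Y), m', ptc c2 Y) \<in> tequiv Y"
    unfolding tequiv_char[OF assms(1)] tgen_ptc using assms(2) ptc_car[OF assms(1)]
    by (auto simp: glueset_def)
qed

lemma glue_dec: assumes "good Y" "((m,A),(m',B)) \<in> tequiv Y"
  shows "(m = m' \<and> A = B) \<or> (\<exists>c1 c2. (m,c1,m',c2) \<in> glueset \<and> A = ptc c1 Y \<and> B = ptc c2 Y)"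
proof -
  have H: "(m,c1,m',c2) \<in> glueset \<Longrightarrow> A = ptc c1 Y \<Longrightarrow> B = ptc c2 Y \<Longrightarrow>
     (\<exists>c1 c2. (m,c1,m',c2) \<in> glueset \<and> A = ptc c1 Y \<and> B = ptc c2 Y)" for c1 c2 by blast
  have "(m,A) = (m',B) \<or> ((m,A),(m',B)) \<in> tgen Y \<or> ((m',B),(m,A)) \<in> tgen Y"
    using assms(2) unfolding tequiv_char[OF assms(1)] by simp
  then show ?thesis
  proof (elim disjE)
    assume "(m,A) = (m',B)" then show ?thesis by simp
  next
    assume "((m,A),(m',B)) \<in> tgen Y"
    then have "(m = Mb \<and> A = ptc TT Y \<and> m' = Ma \<and> B = ptc LL Y) \<or> (m = Ma \<and> A = ptc RR Y \<and> m' = Mc \<and> B = ptc TT Y)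
       \<or> (m = Mc \<and> A = ptc LL Y \<and> m' = Mb \<and> B = ptc RR Y)" unfolding tgen_ptc by simp
    then show ?thesis
    proof (elim disjE conjE)
      assume "m = Mb" "A = ptc TT Y" "m' = Ma" "B = ptc LL Y" then show ?thesis using H[of TT LL] by (simp add: glueset_def)
    next
      assume "m = Ma" "A = ptc RR Y" "m' = Mc" "B = ptc TT Y" then show ?thesis using H[of RR TT] by (simp add: glueset_def)
    next
      assume "m = Mc" "A = ptc LL Y" "m' = Mb" "B = ptc RR Y" then show ?thesis using H[of LL RR] by (simp add: glueset_def)
    qed
  next
    assume "((m',B),(m,A)) \<in> tgen Y"
    then have "(m' = Mb \<and> B = ptc TT Y \<and> m = Ma \<and> A = ptc LL Y) \<or> (m' = Ma \<and> B = ptc RR Y \<and> m = Mc \<and> A = ptc TT Y)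
       \<or> (m' = Mc \<and> B = ptc LL Y \<and> m = Mb \<and> A = ptc RR Y)" unfolding tgen_ptc by simp
    then show ?thesis
    proof (elim disjE conjE)
      assume "m' = Mb" "B = ptc TT Y" "m = Ma" "A = ptc LL Y" then show ?thesis using H[of LL TT] by (simp add: glueset_def)
    next
      assume "m' = Ma" "B = ptc RR Y" "m = Mc" "A = ptc TT Y" then show ?thesis using H[of TT RR] by (simp add: glueset_def)
    next
      assume "m' = Mc" "B = ptc LL Y" "m = Mb" "A = ptc RR Y" then show ?thesis using H[of RR LL] by (simp add: glueset_def)
    qed
  qed
qed

lemma CL:
  assumes "tripointed X"
  shows "length w = n \<Longrightarrow> length w' = n \<Longrightarrow> x \<in> car X \<Longrightarrow> x' \<in> car X \<Longrightarrow> tens X w x = tens X w' x' \<Longrightarrow>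
    dst (FI n) (tI w z) (tI w' z') \<le> 2 * (1/2) ^ n"
proof (induction n arbitrary: w w')
  case 0
  have c0: "tI w z \<in> car (FI 0)" "tI w' z' \<in> car (FI 0)" using tI_car 0 by (metis)+
  show ?case using goodD(2)[OF good_FI c0] by simp
next
  case (Suc n)
  obtain m v where w: "w = m # v" "length v = n" using Suc.prems(1) by (cases w) auto
  obtain m' v' where w': "w' = m' # v'" "length v' = n" using Suc.prems(2) by (cases w') auto
  let ?F = "Fpow X n"
  have gF: "good ?F" by (rule good_Fpow[OF assms])
  have cx: "tens X v x \<in> car ?F" "tens X v' x' \<in> car ?F"
    using tens_car[OF Suc.prems(3), of v] tens_car[OF Suc.prems(4), of v'] w w' by simp_all
  have "tens1 ?F m (tens X v x) = tens1 ?F m' (tens X v' x')" using Suc.prems(5) w w' by simp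
  then have rel: "((m, tens X v x), (m', tens X v' x')) \<in> tequiv ?F" by (rule tens1_inj[OF gF cx])
  have ci: "tI v z \<in> car (FI n)" "tI v' z' \<in> car (FI n)" using tI_car w(2) w'(2) by metis+
  have lhs: "dst (FI (Suc n)) (tI w z) (tI w' z') = dst (Ften (FI n)) (tens1 (FI n) m (tI v z)) (tens1 (FI n) m' (tI v' z'))"
    using w w' by simp
  from glue_dec[OF gF rel] show ?case
  proof
    assume "m = m' \<and> tens X v x = tens X v' x'"
    then have e: "m = m'" and IH: "dst (FI n) (tI v z) (tI v' z') \<le> 2 * (1/2) ^ n"
      using Suc.IH[OF w(2) w'(2) Suc.prems(3,4)] by auto
    show ?thesis unfolding lhs e using D1[OF good_FI ci, of m'] IH by simp
  next
    assume "\<exists>c1 c2. (m,c1,m',c2) \<in> glueset \<and> tens X v x = ptc c1 ?F \<and> tens X v' x' = ptc c2 ?F"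
    then obtain c1 c2 where g: "(m,c1,m',c2) \<in> glueset" "tens X v x = ptc c1 ?F" "tens X v' x' = ptc c2 ?F"
      by blast
    let ?C = "tens1 (FI n) m (ptc c1 (FI n))"
    have C2: "?C = tens1 (FI n) m' (ptc c2 (FI n))" by (rule glue_eq[OF good_FI g(1)])
    have pc: "ptc c1 (FI n) \<in> car (FI n)" "ptc c2 (FI n) \<in> car (FI n)" using ptc_car[OF good_FI] by auto
    have d1: "dst (FI n) (tI v z) (ptc c1 (FI n)) \<le> (1/2)^n"
      by (rule corner_dist[OF assms Suc.prems(3) w(2) g(2)])
    have d2: "dst (FI n) (tI v' z') (ptc c2 (FI n)) \<le> (1/2)^n"
      by (rule corner_dist[OF assms Suc.prems(4) w'(2) g(3)])
    have cc: "tens1 (FI n) m (tI v z) \<in> car (Ften (FI n))" "?C \<in> car (Ften (FI n))"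
      "tens1 (FI n) m' (tI v' z') \<in> car (Ften (FI n))"
      using ci pc unfolding car_Ften by blast+
    have "dst (Ften (FI n)) (tens1 (FI n) m (tI v z)) (tens1 (FI n) m' (tI v' z'))
        \<le> dst (Ften (FI n)) (tens1 (FI n) m (tI v z)) ?C + dst (Ften (FI n)) ?C (tens1 (FI n) m' (tI v' z'))"
      by (rule goodD(5)[OF good_Ften[OF good_FI] cc])
    also have "dst (Ften (FI n)) (tens1 (FI n) m (tI v z)) ?C \<le> (1/2)^n / 2"
      using D1[OF good_FI ci(1) pc(1), of m] d1 by simp
    also have "dst (Ften (FI n)) ?C (tens1 (FI n) m' (tI v' z')) \<le> (1/2)^n / 2"
      unfolding C2 using D1[OF good_FI pc(2) ci(2), of m'] d2 goodD(3)[OF good_FI pc(2) ci(2)] by simp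
    finally show ?thesis unfolding lhs by simp
  qed
qed

lemma theta_Gpts: "theta ms z n \<in> Gpts"
  unfolding theta_def Gpts_iff using tI_car[of "map ms [0..<n]" z] by auto

lemma theta_close: assumes "n \<le> k" shows "dG (theta ms z n) (theta ms z k) \<le> (1/2) ^ n"
proof -
  have c: "tI (map ms [0..<n]) z \<in> car (FI n)" "tI (map ms [0..<k]) z \<in> car (FI k)"
    using tI_car by (metis length_map length_upt minus_nat.diff_0)+
  have "dG (theta ms z n) (theta ms z k) = dst (FI k) (emb n k (tI (map ms [0..<n]) z)) (tI (map ms [0..<k]) z)"
    unfolding theta_def using WD[OF c assms] by simp
  also have "emb n k (tI (map ms [0..<n]) z) = tI (map ms [0..<n] @ replicate (k - n) (mz z)) z"
    by (rule emb_tens) (use assms in simp_all)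
  also have "map ms [0..<k] = map ms [0..<n] @ map ms [n..<k]"
    using upt_add_eq_append[of 0 n "k - n"] assms by simp
  also have "dst (FI k) (tI (map ms [0..<n] @ replicate (k - n) (mz z)) z) (tI (map ms [0..<n] @ map ms [n..<k]) z) \<le> (1/2) ^ n"
    using SW[of "map ms [n..<k]" "replicate (k - n) (mz z)" "map ms [0..<n]" z z] assms by simp
  finally show ?thesis .
qed

lemma theta_cauchy: "Gcauchy (theta ms z)"
  unfolding Gcauchy_def
proof (intro conjI allI impI theta_Gpts)
  fix \<epsilon> :: real assume e: "\<epsilon> > 0"
  obtain N where N: "(1/2::real) ^ N < \<epsilon>" using real_arch_pow_inv[OF e, of "1/2"] by auto
  have "dG (theta ms z m) (theta ms z n) < \<epsilon>" if "m \<ge> N" "n \<ge> N" for m n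
  proof (cases "m \<le> n")
    case True
    have "dG (theta ms z m) (theta ms z n) \<le> (1/2)^m" by (rule theta_close[OF True])
    also have "(1/2::real)^m \<le> (1/2)^N" using that by (simp add: power_decreasing)
    finally show ?thesis using N by simp
  next
    case False
    have "dG (theta ms z m) (theta ms z n) = dG (theta ms z n) (theta ms z m)"
      using dG_props(3)[OF theta_Gpts theta_Gpts theta_Gpts] by blast
    also have "\<dots> \<le> (1/2)^n" using False by (intro theta_close) simp
    also have "(1/2::real)^n \<le> (1/2)^N" using that by (simp add: power_decreasing)
    finally show ?thesis using N by simp
  qed
  then show "\<exists>N. \<forall>m\<ge>N. \<forall>n\<ge>N. dG (theta ms z m) (theta ms z n) < \<epsilon>" by blast
qed



lemma Gcauchy_pts: "Gcauchy t \<Longrightarrow> t k \<in> Gpts"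
  unfolding Gcauchy_def by blast

lemma Gcauchy_const: "g \<in> Gpts \<Longrightarrow> Gcauchy (\<lambda>_. g)"
  unfolding Gcauchy_def using dG_props(2)[of g g g] by simp

lemma Srel_refl: assumes "Gcauchy t" shows "(t,t) \<in> Srel"
proof -
  have "dG (t k) (t k) = 0" for k using dG_props(2)[OF Gcauchy_pts[OF assms] Gcauchy_pts[OF assms] Gcauchy_pts[OF assms]] .
  then show ?thesis unfolding Srel_def using assms by simp
qed

lemma dS_bound:
  assumes t: "Gcauchy t" and t0: "Gcauchy t0" and g: "g \<in> Gpts"
    and close: "\<And>k. k \<ge> n \<Longrightarrow> dG g (t k) \<le> b"
    and lim0: "(\<lambda>k. dG (t k) (t0 k)) \<longlonglongrightarrow> 0"
  shows "0 \<le> dS (Sinc g) (Srel `` {t0}) \<and> dS (Sinc g) (Srel `` {t0}) \<le> b"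
proof -
  define \<sigma> where "\<sigma> = (SOME s. s \<in> Sinc g)"
  define \<tau> where "\<tau> = (SOME s. s \<in> Srel `` {t0})"
  have "(\<lambda>_. g) \<in> Sinc g" unfolding Sinc_def using Srel_refl[OF Gcauchy_const[OF g]] by simp
  then have "\<sigma> \<in> Sinc g" unfolding \<sigma>_def by (rule someI[where P="\<lambda>s. s \<in> Sinc g"])
  then have s: "Gcauchy \<sigma>" "(\<lambda>k. dG g (\<sigma> k)) \<longlonglongrightarrow> 0" unfolding Sinc_def Srel_def by auto
  have "t0 \<in> Srel `` {t0}" using Srel_refl[OF t0] by simp
  then have "\<tau> \<in> Srel `` {t0}" unfolding \<tau>_def by (rule someI[where P="\<lambda>s. s \<in> Srel `` {t0}"])
  then have ta: "Gcauchy \<tau>" "(\<lambda>k. dG (t0 k) (\<tau> k)) \<longlonglongrightarrow> 0" unfolding Srel_def by auto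
  define a where "a k = dG (\<sigma> k) (\<tau> k)" for k
  have dS: "dS (Sinc g) (Srel `` {t0}) = lim a" unfolding dS_def a_def \<sigma>_def \<tau>_def by simp
  note P = Gcauchy_pts[OF s(1)] Gcauchy_pts[OF ta(1)] Gcauchy_pts[OF t] Gcauchy_pts[OF t0]
  have diff: "\<bar>a m - a k\<bar> \<le> dG (\<sigma> m) (\<sigma> k) + dG (\<tau> m) (\<tau> k)" for m k
  proof -
    have 1: "a m \<le> dG (\<sigma> m) (\<sigma> k) + a k + dG (\<tau> k) (\<tau> m)"
      using dG_props(4)[OF P(1)[of m] P(1)[of k] P(2)[of m]] dG_props(4)[OF P(1)[of k] P(2)[of k] P(2)[of m]]
      unfolding a_def by linarith
    have 2: "a k \<le> dG (\<sigma> k) (\<sigma> m) + a m + dG (\<tau> m) (\<tau> k)"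
      using dG_props(4)[OF P(1)[of k] P(1)[of m] P(2)[of k]] dG_props(4)[OF P(1)[of m] P(2)[of m] P(2)[of k]]
      unfolding a_def by linarith
    have 3: "dG (\<sigma> k) (\<sigma> m) = dG (\<sigma> m) (\<sigma> k)" "dG (\<tau> k) (\<tau> m) = dG (\<tau> m) (\<tau> k)"
      using dG_props(3)[OF P(1)[of k] P(1)[of m] P(1)[of m]] dG_props(3)[OF P(2)[of k] P(2)[of m] P(2)[of m]] by auto
    show ?thesis using 1 2 3 by linarith
  qed
  have "Cauchy a"
  proof (rule metric_CauchyI)
    fix e :: real assume e: "0 < e"
    obtain N1 where N1: "\<forall>m\<ge>N1. \<forall>k\<ge>N1. dG (\<sigma> m) (\<sigma> k) < e/2" using s(1) e unfolding Gcauchy_def by (meson half_gt_zero)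
    obtain N2 where N2: "\<forall>m\<ge>N2. \<forall>k\<ge>N2. dG (\<tau> m) (\<tau> k) < e/2" using ta(1) e unfolding Gcauchy_def by (meson half_gt_zero)
    have "dist (a m) (a k) < e" if "m \<ge> max N1 N2" "k \<ge> max N1 N2" for m k
      using diff[of m k] N1 N2 that unfolding dist_real_def by fastforce
    then show "\<exists>M. \<forall>m\<ge>M. \<forall>n\<ge>M. dist (a m) (a n) < e" by blast
  qed
  then have conv: "a \<longlonglongrightarrow> lim a" using Cauchy_convergent_iff convergent_LIMSEQ_iff by blast
  have "0 \<le> lim a"
    by (rule LIMSEQ_le_const[OF conv]) (use dG_props(1)[OF P(1) P(2) P(2)] in \<open>auto simp: a_def\<close>)
  moreover have "lim a \<le> 0 + b + 0 + 0"
  proof (rule LIMSEQ_le[OF conv])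
    show "(\<lambda>k. dG g (\<sigma> k) + b + dG (t k) (t0 k) + dG (t0 k) (\<tau> k)) \<longlonglongrightarrow> 0 + b + 0 + 0"
      by (intro tendsto_add s(2) lim0 ta(2) tendsto_const)
    have "a k \<le> dG g (\<sigma> k) + b + dG (t k) (t0 k) + dG (t0 k) (\<tau> k)" if "k \<ge> n" for k
    proof -
      have "a k \<le> dG (\<sigma> k) g + dG g (\<tau> k)" unfolding a_def by (rule dG_props(4)[OF P(1) g P(2)])
      moreover have "dG (\<sigma> k) g = dG g (\<sigma> k)" using dG_props(3)[OF P(1) g g] by simp
      moreover have "dG g (\<tau> k) \<le> dG g (t k) + dG (t k) (\<tau> k)" by (rule dG_props(4)[OF g P(3) P(2)])
      moreover have "dG (t k) (\<tau> k) \<le> dG (t k) (t0 k) + dG (t0 k) (\<tau> k)" by (rule dG_props(4)[OF P(3) P(4) P(2)])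
      ultimately show ?thesis using close[OF that] by linarith
    qed
    then show "\<exists>N. \<forall>k\<ge>N. a k \<le> dG g (\<sigma> k) + b + dG (t k) (t0 k) + dG (t0 k) (\<tau> k)" by blast
  qed
  ultimately show ?thesis unfolding dS by simp
qed

theorem mainTheorem5:
  fixes X :: "'x tms" and e :: "'x \<Rightarrow> 'x pt" and x :: 'x
  assumes "coalg X e"
    and "x \<in> car X"
  shows "\<exists>s\<in>Spts. \<forall>(ms :: nat \<Rightarrow> Mlet) (z :: tri).
           (\<forall>n. \<exists>xn\<in>car X. chi X e x n = tens X (map ms [0..<n]) xn) \<longrightarrow>
           (\<lambda>n. dS (Sinc (theta ms z n)) s) \<longlonglongrightarrow> 0"
proof -
  have tp: "tripointed X" using assms(1) unfolding coalg_def by simp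
  define valid where "valid ms \<longleftrightarrow> (\<forall>n. \<exists>xn\<in>car X. chi X e x n = tens X (map ms [0..<n]) xn)" for ms
  obtain ms0 where h0: "(\<exists>ms. valid ms) \<longrightarrow> valid ms0" by blast
  define t0 where "t0 = theta ms0 TT"
  have c0: "Gcauchy t0" unfolding t0_def by (rule theta_cauchy)
  have s_in: "Srel `` {t0} \<in> Spts" unfolding Spts_def using c0 by blast
  show ?thesis
  proof (intro bexI[OF _ s_in] allI impI)
    fix ms :: "nat \<Rightarrow> Mlet" and z :: tri
    assume v: "\<forall>n. \<exists>xn\<in>car X. chi X e x n = tens X (map ms [0..<n]) xn"
    then have v0: "valid ms0" using h0 unfolding valid_def by blast
    have cl: "dG (theta ms z k) (t0 k) \<le> 2 * (1/2) ^ k" for k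
    proof -
      obtain xk where xk: "xk \<in> car X" "chi X e x k = tens X (map ms [0..<k]) xk" using v by blast
      obtain yk where yk: "yk \<in> car X" "chi X e x k = tens X (map ms0 [0..<k]) yk" using v0 unfolding valid_def by blast
      have c: "tI (map ms [0..<k]) z \<in> car (FI k)" "tI (map ms0 [0..<k]) TT \<in> car (FI k)"
        using tI_car by (metis length_map length_upt minus_nat.diff_0)+
      have "dG (theta ms z k) (t0 k) = dst (FI k) (tI (map ms [0..<k]) z) (tI (map ms0 [0..<k]) TT)"
        unfolding t0_def theta_def using WD[OF c order.refl order.refl] by simp
      also have "\<dots> \<le> 2 * (1/2) ^ k"
        by (rule CL[OF tp, where x=xk and x'=yk]) (use xk yk in simp_all)
      finally show ?thesis .
    qed
    have lim0: "(\<lambda>k. dG (theta ms z k) (t0 k)) \<longlonglongrightarrow> 0"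
    proof (rule tendsto_sandwich[where f="\<lambda>_. 0" and h="\<lambda>k. 2 * (1/2::real) ^ k"])
      show "\<forall>\<^sub>F k in sequentially. 0 \<le> dG (theta ms z k) (t0 k)"
        using dG_props(1)[OF theta_Gpts Gcauchy_pts[OF c0] Gcauchy_pts[OF c0]] by simp
      show "\<forall>\<^sub>F k in sequentially. dG (theta ms z k) (t0 k) \<le> 2 * (1/2) ^ k" using cl by simp
      show "((\<lambda>_. 0::real) \<longlongrightarrow> 0) sequentially" by simp
      show "((\<lambda>k. 2 * (1/2::real) ^ k) \<longlongrightarrow> 0) sequentially"
        using tendsto_mult[OF tendsto_const LIMSEQ_realpow_zero[of "1/2::real"], of 2] by simp
    qed
    have bd: "0 \<le> dS (Sinc (theta ms z n)) (Srel `` {t0}) \<and> dS (Sinc (theta ms z n)) (Srel `` {t0}) \<le> (1/2) ^ n" for n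
      by (rule dS_bound[OF theta_cauchy c0 theta_Gpts _ lim0]) (rule theta_close)
    show "(\<lambda>n. dS (Sinc (theta ms z n)) (Srel `` {t0})) \<longlonglongrightarrow> 0"
    proof (rule tendsto_sandwich[where f="\<lambda>_. 0" and h="\<lambda>k. (1/2::real) ^ k"])
      show "\<forall>\<^sub>F k in sequentially. 0 \<le> dS (Sinc (theta ms z k)) (Srel `` {t0})" using bd by simp
      show "\<forall>\<^sub>F k in sequentially. dS (Sinc (theta ms z k)) (Srel `` {t0}) \<le> (1/2) ^ k" using bd by simp
      show "((\<lambda>_. 0::real) \<longlongrightarrow> 0) sequentially" by simp
      show "((\<lambda>k. (1/2::real) ^ k) \<longlongrightarrow> 0) sequentially" by (rule LIMSEQ_realpow_zero) simp_all
    qed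
  qed
qed

end
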